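(* In the model of the context with $p=q=1$ and $L\ge2$: if $\beta<\frac{\gamma}{L-1}$ then $$\mathtt{P_L}\le\left(1-\left(\frac{\gamma}{\beta}-(L-2)\right)^{-2/\alpha}\right)^{L-1},$$ and if $\beta\ge\frac{\gamma}{L-1}$ then $\mathtt{P_L}=0$.
   Context: Model: Let $\Phi$ be a homogeneous Poisson point process on $\mathbb{R}^2$ of intensity $\lambda>0$ (base stations); the user is at the origin. Label the points in increasing distance as $x_1,x_2,\dots$. Fix an integer $L$, $\alpha>2$, $P>0$, $\sigma^2\ge0$, $\gamma>0$, $\beta>0$, $p,q\in[0,1]$. Independently of $\Phi$ and each other let $a_1,\dots,a_L$ be Bernoulli($p$) and $b_{L+1},b_{L+2},\dots$ be Bernoulli($q$). For $k\le L$, $$\mathsf{SINR}_k(L)=\frac{P\|x_k\|^{-\alpha}}{\sum_{i=1,i\ne k}^{L}a_iP\|x_i\|^{-\alpha}+\sum_{j=L+1}^\infty b_jP\|x_j\|^{-\alpha}+\sigma^2},$$ and $\mathtt{P_L}=\mathbb{E}\left[\prod_{k=1}^L\mathbb{1}(\mathsf{SINR}_k(L)\ge\beta/\gamma)\right]$. *)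

theory Defs
  imports "HOL-Probability.Probability"
begin

definition poisson_point_process ::
  "'w measure \<Rightarrow> ('w \<Rightarrow> (real^2) set) \<Rightarrow> real \<Rightarrow> bool" where
  "poisson_point_process M Phi lam \<longleftrightarrow>
     prob_space M \<and>
     (\<forall>\<omega>\<in>space M. \<forall>B. bounded B \<longrightarrow> finite (Phi \<omega> \<inter> B)) \<and>
     (\<forall>B \<in> sets lborel. bounded B \<longrightarrow>
        (\<forall>k::nat. measure M {\<omega>\<in>space M. card (Phi \<omega> \<inter> B) = k}
            = (lam * measure lborel B) ^ k / fact k * exp (- (lam * measure lborel B)))) \<and>
     (\<forall>(n::nat) (B :: nat \<Rightarrow> (real^2) set).
        (\<forall>i<n. B i \<in> sets lborel \<and> bounded (B i)) \<and> disjoint_family_on B {..<n} \<longrightarrow>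
        prob_space.indep_vars M (\<lambda>_. count_space UNIV) (\<lambda>i \<omega>. card (Phi \<omega> \<inter> B i)) {..<n})"

text \<open>Distance from the origin of the k-th nearest point (k >= 1) of a point set,
  i.e. norm of x_k when points are labelled in increasing distance (ties counted
  with multiplicity).\<close>

definition kth_dist :: "(real^2) set \<Rightarrow> nat \<Rightarrow> real" where
  "kth_dist S k = Inf {r::real. k \<le> card (S \<inter> cball 0 r)}"

text \<open>SINR_k(L). The Bernoulli marks are c i (i = 1..L: a_i; i >= L+1: b_i).\<close>

definition SINR ::
  "(real^2) set \<Rightarrow> (nat \<Rightarrow> bool) \<Rightarrow> nat \<Rightarrow> real \<Rightarrow> real \<Rightarrow> real \<Rightarrow> nat \<Rightarrow> real" where
  "SINR S c L alpha P sigma2 k =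
     P * kth_dist S k powr (- alpha) /
     ((\<Sum>i\<in>{1..L} - {k}. of_bool (c i) * P * kth_dist S i powr (- alpha))
      + (\<Sum>n. of_bool (c (n + L + 1)) * P * kth_dist S (n + L + 1) powr (- alpha))
      + sigma2)"

definition coverage_PL ::
  "'w measure \<Rightarrow> ('w \<Rightarrow> (real^2) set) \<Rightarrow> (nat \<Rightarrow> 'w \<Rightarrow> bool) \<Rightarrow> nat \<Rightarrow> real \<Rightarrow> real \<Rightarrow> real
     \<Rightarrow> real \<Rightarrow> real \<Rightarrow> real" where
  "coverage_PL M Phi c L alpha P sigma2 gamma beta =
     (\<integral>\<omega>. (\<Prod>k\<in>{1..L}. of_bool (beta / gamma \<le> SINR (Phi \<omega>) (\<lambda>i. c i \<omega>) L alpha P sigma2 k)) \<partial>M)"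

end

theory Submission
  imports Defs "HOL-Analysis.Analysis" "HOL-Real_Asymp.Real_Asymp"
begin

definition locfin :: "(real^2) set \<Rightarrow> bool" where
  "locfin S \<longleftrightarrow> (\<forall>B. bounded B \<longrightarrow> finite (S \<inter> B))"

lemma locfin_cball: "locfin S \<Longrightarrow> finite (S \<inter> cball 0 r)"
  unfolding locfin_def by auto

lemma locfin_ball: "locfin S \<Longrightarrow> finite (S \<inter> ball 0 r)"
  unfolding locfin_def by auto

lemma kd_bdd: "1 \<le> k \<Longrightarrow> bdd_below {r::real. k \<le> card (S \<inter> cball 0 r)}"
proof (rule bdd_belowI[of _ 0])
  fix r assume "1 \<le> k" and r: "r \<in> {r::real. k \<le> card (S \<inter> cball 0 r)}"
  show "0 \<le> r"
  proof (rule ccontr)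
    assume "\<not> 0 \<le> r"
    then have "cball (0::real^2) r = {}" by auto
    with r \<open>1 \<le> k\<close> show False by auto
  qed
qed

lemma kd_le:
  assumes "1 \<le> k" "k \<le> card (S \<inter> cball 0 r)"
  shows "kth_dist S k \<le> r"
  unfolding kth_dist_def
  by (rule cInf_lower) (use assms kd_bdd[OF assms(1)] in auto)

lemma kd_lt_ball:
  assumes lf: "locfin S" and k: "1 \<le> k" "k \<le> card (S \<inter> ball 0 r)"
  shows "kth_dist S k < r"
proof -
  let ?F = "S \<inter> ball 0 r"
  have fin: "finite ?F" using locfin_ball[OF lf] .
  have ne: "?F \<noteq> {}" using k by auto
  define r' where "r' = Max (norm ` ?F)"
  have r'lt: "r' < r" unfolding r'_def using fin ne by (subst Max_less_iff) auto
  have sub: "?F \<subseteq> S \<inter> cball 0 r'"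
    unfolding r'_def using fin by (auto intro!: Max_ge)
  have "card ?F \<le> card (S \<inter> cball 0 r')"
    by (rule card_mono[OF locfin_cball[OF lf] sub])
  then have "kth_dist S k \<le> r'" using k by (intro kd_le) auto
  then show ?thesis using r'lt by simp
qed

lemma kd_lessD:
  assumes lf: "locfin S" and k: "1 \<le> k" and ex: "\<exists>R. k \<le> card (S \<inter> cball 0 R)"
    and lt: "kth_dist S k < r"
  shows "k \<le> card (S \<inter> ball 0 r)"
proof -
  have ne: "{r::real. k \<le> card (S \<inter> cball 0 r)} \<noteq> {}" using ex by auto
  obtain r' where r': "k \<le> card (S \<inter> cball 0 r')" "r' < r"
    using cInf_lessD[OF ne lt[unfolded kth_dist_def]] by auto
  have "S \<inter> cball 0 r' \<subseteq> S \<inter> ball 0 r" using r' by auto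
  then have "card (S \<inter> cball 0 r') \<le> card (S \<inter> ball 0 r)"
    by (rule card_mono[OF locfin_ball[OF lf]])
  then show ?thesis using r' by simp
qed

lemma kd_lessD':
  assumes lf: "locfin S" and k: "1 \<le> k" and ex: "\<exists>R. k \<le> card (S \<inter> cball 0 R)"
    and lt: "kth_dist S k < r"
  shows "k \<le> card (S \<inter> cball 0 r)"
proof -
  have "card (S \<inter> ball 0 r) \<le> card (S \<inter> cball 0 r)"
    by (rule card_mono[OF locfin_cball[OF lf]]) auto
  then show ?thesis using kd_lessD[OF assms] by simp
qed

lemma kd_mono:
  assumes k: "1 \<le> i" "i \<le> k" and ex: "\<exists>R. k \<le> card (S \<inter> cball 0 R)"
  shows "kth_dist S i \<le> kth_dist S k"
  unfolding kth_dist_def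
  by (rule cInf_superset_mono) (use ex k kd_bdd[of i S] in auto)

lemma kd_pos:
  assumes lf: "locfin S" and z: "0 \<notin> S" and k: "1 \<le> k"
    and ex: "\<exists>R. k \<le> card (S \<inter> cball 0 R)"
  shows "0 < kth_dist S k"
proof -
  let ?F = "S \<inter> cball 0 1"
  have fin: "finite ?F" using locfin_cball[OF lf] .
  define \<delta> where "\<delta> = (if ?F = {} then 1 else min 1 (Min (norm ` ?F)))"
  have dpos: "\<delta> > 0"
    unfolding \<delta>_def using fin z by (auto simp: Min_gr_iff)
  have emp: "S \<inter> cball 0 r = {}" if "r < \<delta>" for r
  proof (rule ccontr)
    assume "S \<inter> cball 0 r \<noteq> {}"
    then obtain x where x: "x \<in> S" "norm x \<le> r" by auto
    have "r < 1" using that unfolding \<delta>_def by (auto split: if_splits)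
    then have xF: "x \<in> ?F" using x by auto
    then have "Min (norm ` ?F) \<le> norm x" using fin by (auto intro!: Min_le)
    then have "\<delta> \<le> norm x" unfolding \<delta>_def using xF by auto
    then show False using x that by simp
  qed
  have "\<delta> \<le> kth_dist S k"
    unfolding kth_dist_def
  proof (rule cInf_greatest)
    show "{r. k \<le> card (S \<inter> cball 0 r)} \<noteq> {}" using ex by auto
    fix r assume "r \<in> {r. k \<le> card (S \<inter> cball 0 r)}"
    then show "\<delta> \<le> r" using emp[of r] k by (cases "r < \<delta>") auto
  qed
  then show ?thesis using dpos by simp
qed

lemma ppp_prob_space: "poisson_point_process M Phi lam \<Longrightarrow> prob_space M"
  unfolding poisson_point_process_def by (elim conjE)

lemma ppp_locfin: assumes "poisson_point_process M Phi lam" "\<omega> \<in> space M" shows "locfin (Phi \<omega>)"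
proof -
  have "\<forall>\<omega>\<in>space M. \<forall>B. bounded B \<longrightarrow> finite (Phi \<omega> \<inter> B)"
    using assms(1) unfolding poisson_point_process_def by (elim conjE)
  then show ?thesis using assms(2) unfolding locfin_def by simp
qed

lemma ppp_indep:
  fixes n :: nat and B :: "nat \<Rightarrow> (real^2) set"
  assumes "poisson_point_process M Phi lam"
    "\<And>i. i < n \<Longrightarrow> B i \<in> sets lborel \<and> bounded (B i)" "disjoint_family_on B {..<n}"
  shows "prob_space.indep_vars M (\<lambda>_. count_space UNIV) (\<lambda>i \<omega>. card (Phi \<omega> \<inter> B i)) {..<n}"
proof -
  have "\<forall>(n::nat) (B :: nat \<Rightarrow> (real^2) set).
        (\<forall>i<n. B i \<in> sets lborel \<and> bounded (B i)) \<and> disjoint_family_on B {..<n} \<longrightarrow>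
        prob_space.indep_vars M (\<lambda>_. count_space UNIV) (\<lambda>i \<omega>. card (Phi \<omega> \<inter> B i)) {..<n}"
    using assms(1) unfolding poisson_point_process_def by (elim conjE)
  from spec[OF spec[OF this, of n], of B] show ?thesis using assms(2,3) by simp
qed

lemma ppp_meas:
  assumes ppp: "poisson_point_process M Phi lam" and B: "B \<in> sets lborel" "bounded B"
  shows "(\<lambda>\<omega>. card (Phi \<omega> \<inter> B)) \<in> measurable M (count_space UNIV)"
proof -
  interpret prob_space M using ppp_prob_space[OF ppp] .
  have "indep_vars (\<lambda>_. count_space UNIV) (\<lambda>i \<omega>. card (Phi \<omega> \<inter> (\<lambda>_::nat. B) i)) {..<1}"
    by (rule ppp_indep[OF ppp]) (use B in \<open>simp_all add: disjoint_family_on_def\<close>)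
  then show ?thesis unfolding indep_vars_def by auto
qed

lemma ppp_sets:
  assumes ppp: "poisson_point_process M Phi lam" and B: "B \<in> sets lborel" "bounded B"
  shows "{\<omega>\<in>space M. card (Phi \<omega> \<inter> B) \<in> A} \<in> sets M"
proof -
  have "{\<omega>\<in>space M. card (Phi \<omega> \<inter> B) \<in> A} = (\<lambda>\<omega>. card (Phi \<omega> \<inter> B)) -` A \<inter> space M" by auto
  also have "\<dots> \<in> sets M" by (rule measurable_sets[OF ppp_meas[OF assms]]) simp
  finally show ?thesis .
qed

lemma ppp_prob:
  assumes ppp: "poisson_point_process M Phi lam" and B: "B \<in> sets lborel" "bounded B"
  shows "measure M {\<omega>\<in>space M. card (Phi \<omega> \<inter> B) = k}
    = (lam * measure lborel B) ^ k / fact k * exp (- (lam * measure lborel B))"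
proof -
  have "\<forall>B \<in> sets lborel. bounded B \<longrightarrow>
        (\<forall>k::nat. measure M {\<omega>\<in>space M. card (Phi \<omega> \<inter> B) = k}
            = (lam * measure lborel B) ^ k / fact k * exp (- (lam * measure lborel B)))"
    using ppp unfolding poisson_point_process_def by (elim conjE)
  then show ?thesis using B by simp
qed

lemma ppp_indep3:
  fixes B :: "nat \<Rightarrow> (real^2) set"
  assumes ppp: "poisson_point_process M Phi lam"
    and B: "\<And>i. i < 3 \<Longrightarrow> B i \<in> sets lborel \<and> bounded (B i)"
    and d: "B 0 \<inter> B 1 = {}" "B 0 \<inter> B 2 = {}" "B 1 \<inter> B 2 = {}"
  shows "measure M ({\<omega>\<in>space M. card (Phi \<omega> \<inter> B 0) \<in> A0}
       \<inter> {\<omega>\<in>space M. card (Phi \<omega> \<inter> B 1) \<in> A1} \<inter> {\<omega>\<in>space M. card (Phi \<omega> \<inter> B 2) \<in> A2})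
     = measure M {\<omega>\<in>space M. card (Phi \<omega> \<inter> B 0) \<in> A0}
       * measure M {\<omega>\<in>space M. card (Phi \<omega> \<inter> B 1) \<in> A1}
       * measure M {\<omega>\<in>space M. card (Phi \<omega> \<inter> B 2) \<in> A2}"
proof -
  interpret prob_space M using ppp_prob_space[OF ppp] .
  have df: "disjoint_family_on B {..<3}"
    unfolding disjoint_family_on_def
  proof (intro ballI impI)
    fix i j :: nat assume "i \<in> {..<3}" "j \<in> {..<3}" "i \<noteq> j"
    then have "(i=0\<and>j=1) \<or> (i=1\<and>j=0) \<or> (i=0\<and>j=2) \<or> (i=2\<and>j=0) \<or> (i=1\<and>j=2) \<or> (i=2\<and>j=1)"
      by (auto simp: lessThan_iff less_Suc_eq numeral_3_eq_3)
    then show "B i \<inter> B j = {}" using d by (elim disjE conjE; simp add: Int_commute)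
  qed
  have iv: "indep_vars (\<lambda>_. count_space UNIV) (\<lambda>i \<omega>. card (Phi \<omega> \<inter> B i)) {..<3}"
    by (rule ppp_indep[OF ppp B df])
  define A where "A i = (if i = 0 then A0 else if i = 1 then A1 else A2)" for i :: nat
  have J: "{0,1,2} \<subseteq> {..<3::nat}" by auto
  have "prob (\<Inter>i\<in>{0,1,2}. (\<lambda>\<omega>. card (Phi \<omega> \<inter> B i)) -` A i \<inter> space M)
     = (\<Prod>i\<in>{0,1,2}. prob ((\<lambda>\<omega>. card (Phi \<omega> \<inter> B i)) -` A i \<inter> space M))"
    by (rule indep_varsD[OF iv _ _ J]) auto
  moreover have "(\<lambda>\<omega>. card (Phi \<omega> \<inter> B i)) -` A i \<inter> space M = {\<omega>\<in>space M. card (Phi \<omega> \<inter> B i) \<in> A i}" for i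
    by auto
  ultimately have e1: "prob (\<Inter>i\<in>{0,1,2}. {\<omega>\<in>space M. card (Phi \<omega> \<inter> B i) \<in> A i})
     = (\<Prod>i\<in>{0,1,2}. prob {\<omega>\<in>space M. card (Phi \<omega> \<inter> B i) \<in> A i})" by simp
  have e2: "(\<Inter>i\<in>{0::nat,1,2}. {\<omega>\<in>space M. card (Phi \<omega> \<inter> B i) \<in> A i})
     = {\<omega>\<in>space M. card (Phi \<omega> \<inter> B 0) \<in> A0}
       \<inter> {\<omega>\<in>space M. card (Phi \<omega> \<inter> B 1) \<in> A1} \<inter> {\<omega>\<in>space M. card (Phi \<omega> \<inter> B 2) \<in> A2}"
    by (auto simp: A_def)
  have e3: "(\<Prod>i\<in>{0::nat,1,2}. prob {\<omega>\<in>space M. card (Phi \<omega> \<inter> B i) \<in> A i})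
     = prob {\<omega>\<in>space M. card (Phi \<omega> \<inter> B 0) \<in> A0}
       * prob {\<omega>\<in>space M. card (Phi \<omega> \<inter> B 1) \<in> A1}
       * prob {\<omega>\<in>space M. card (Phi \<omega> \<inter> B 2) \<in> A2}"
    by (simp add: A_def)
  show ?thesis unfolding e2[symmetric] e3[symmetric] by (rule e1)
qed

lemma DIM_real2: "DIM(real^2) = 2" by simp

lemma measure_ball2: "r \<ge> 0 \<Longrightarrow> measure lborel (ball (0::real^2) r) = unit_ball_vol 2 * r\<^sup>2"
  using content_ball[of r "0::real^2"] by simp

lemma measure_annulus2:
  assumes "0 \<le> r1" "r1 \<le> r2"
  shows "measure lborel (ball (0::real^2) r2 - ball 0 r1) = unit_ball_vol 2 * (r2\<^sup>2 - r1\<^sup>2)"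
proof -
  have "measure lborel (ball (0::real^2) r2 - ball 0 r1) = measure lborel (ball (0::real^2) r2) - measure lborel (ball (0::real^2) r1)"
  proof (rule measure_Diff)
    show "emeasure lborel (ball (0::real^2) r2) \<noteq> \<infinity>"
      using emeasure_ball[of r2 "0::real^2"] assms by simp
    show "ball (0::real^2) r2 \<in> sets lborel" "ball (0::real^2) r1 \<in> sets lborel" by (simp_all add: borel_open)
    show "ball (0::real^2) r1 \<subseteq> ball 0 r2" using assms by (simp add: subset_ball)
  qed
  then show ?thesis using assms measure_ball2 by (simp add: algebra_simps)
qed

lemma ppp_sets_eq:
  assumes "poisson_point_process M Phi lam" "B \<in> sets lborel" "bounded B"
  shows "{\<omega>\<in>space M. card (Phi \<omega> \<inter> B) = k} \<in> sets M"
  using ppp_sets[OF assms, of "{k}"] by simp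

lemma ppp_ge1:
  assumes ppp: "poisson_point_process M Phi lam" and B: "B \<in> sets lborel" "bounded B"
  shows "measure M {\<omega>\<in>space M. card (Phi \<omega> \<inter> B) \<in> {1..}} \<le> lam * measure lborel B"
proof -
  interpret prob_space M using ppp_prob_space[OF ppp] .
  let ?\<mu> = "lam * measure lborel B"
  have "{\<omega>\<in>space M. card (Phi \<omega> \<inter> B) \<in> {1..}} = space M - {\<omega>\<in>space M. card (Phi \<omega> \<inter> B) = 0}"
    by auto
  then have "prob {\<omega>\<in>space M. card (Phi \<omega> \<inter> B) \<in> {1..}} = 1 - prob {\<omega>\<in>space M. card (Phi \<omega> \<inter> B) = 0}"
    using prob_compl[OF ppp_sets_eq[OF ppp B]] by simp
  also have "\<dots> = 1 - exp (- ?\<mu>)" using ppp_prob[OF ppp B, of 0] by simp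
  also have "\<dots> \<le> ?\<mu>" using exp_ge_add_one_self[of "- ?\<mu>"] by simp
  finally show ?thesis .
qed

lemma ppp_ge2:
  assumes ppp: "poisson_point_process M Phi lam" and B: "B \<in> sets lborel" "bounded B"
    and lam: "lam \<ge> 0"
  shows "measure M {\<omega>\<in>space M. card (Phi \<omega> \<inter> B) \<in> {2..}} \<le> (lam * measure lborel B)\<^sup>2"
proof -
  interpret prob_space M using ppp_prob_space[OF ppp] .
  define \<mu> where "\<mu> = lam * measure lborel B"
  have mu: "\<mu> \<ge> 0" unfolding \<mu>_def using lam by simp
  let ?E = "\<lambda>k. {\<omega>\<in>space M. card (Phi \<omega> \<inter> B) = k}"
  have "{\<omega>\<in>space M. card (Phi \<omega> \<inter> B) \<in> {2..}} = space M - (?E 0 \<union> ?E 1)"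
    by auto
  then have "prob {\<omega>\<in>space M. card (Phi \<omega> \<inter> B) \<in> {2..}} = 1 - prob (?E 0 \<union> ?E 1)"
    using prob_compl[of "?E 0 \<union> ?E 1"] ppp_sets_eq[OF ppp B] by auto
  also have "prob (?E 0 \<union> ?E 1) = prob (?E 0) + prob (?E 1)"
    by (rule finite_measure_Union) (use ppp_sets_eq[OF ppp B] in auto)
  also have "\<dots> = exp (- \<mu>) + \<mu> * exp (- \<mu>)"
    using ppp_prob[OF ppp B, of 0] ppp_prob[OF ppp B, of 1] unfolding \<mu>_def by simp
  also have "1 - (exp (- \<mu>) + \<mu> * exp (- \<mu>)) \<le> \<mu>\<^sup>2"
  proof (cases "\<mu> \<le> 1")
    case True
    have "exp (- \<mu>) \<ge> 1 - \<mu>" using exp_ge_add_one_self[of "- \<mu>"] by simp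
    then have "exp (- \<mu>) * (1 + \<mu>) \<ge> (1 - \<mu>) * (1 + \<mu>)" using mu by (intro mult_right_mono) auto
    then show ?thesis by (simp add: algebra_simps power2_eq_square)
  next
    case False
    have "0 \<le> exp (- \<mu>) + \<mu> * exp (- \<mu>)" using mu by simp
    moreover have "1 * 1 \<le> \<mu> * \<mu>" using False by (intro mult_mono) auto
    then have "1 \<le> \<mu>\<^sup>2" by (simp add: power2_eq_square)
    ultimately show ?thesis by simp
  qed
  finally show ?thesis unfolding \<mu>_def .
qed

lemma negbin_sums:
  fixes x :: real assumes x: "0 \<le> x" "x < 1"
  shows "(\<lambda>n. real ((n + m) choose m) * x ^ n) sums ((1 / (1 - x)) ^ (m + 1))"
proof (induction m)
  case 0
  then show ?case using geometric_sums[of x] x by (simp add: divide_simps)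
next
  case (Suc m)
  let ?a = "\<lambda>n. real ((n + m) choose m) * x ^ n"
  let ?b = "\<lambda>n. x ^ n"
  have sa: "summable (\<lambda>k. norm (?a k))" using Suc.IH x by (simp add: sums_iff abs_mult)
  have sb: "summable (\<lambda>k. norm (?b k))" using x by (simp add: summable_geometric)
  have cp: "(\<lambda>k. \<Sum>i\<le>k. ?a i * ?b (k - i)) sums ((\<Sum>k. ?a k) * (\<Sum>k. ?b k))"
    by (rule Cauchy_product_sums[OF sa sb])
  have eq: "(\<Sum>i\<le>k. ?a i * ?b (k - i)) = real ((k + Suc m) choose Suc m) * x ^ k" for k
  proof -
    have "(\<Sum>i\<le>k. ?a i * ?b (k - i)) = (\<Sum>i\<le>k. real ((m + i) choose i) * x ^ k)"
    proof (rule sum.cong[OF refl])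
      fix i assume "i \<in> {..k}"
      then have "x ^ i * x ^ (k - i) = x ^ k" by (simp add: power_add[symmetric])
      moreover have "(i + m) choose m = (m + i) choose i"
        using binomial_symmetric[of i "m + i"] by (simp add: add.commute)
      ultimately show "?a i * ?b (k - i) = real ((m + i) choose i) * x ^ k"
        by (simp add: mult.assoc)
    qed
    also have "\<dots> = (\<Sum>i\<le>k. real ((m + i) choose i)) * x ^ k"
      by (simp add: sum_distrib_right)
    also have "(\<Sum>i\<le>k. real ((m + i) choose i)) = real (Suc (m + k) choose k)"
      by (subst of_nat_sum[symmetric]) (simp only: sum_choose_lower)
    also have "Suc (m + k) choose k = (k + Suc m) choose Suc m"
      using binomial_symmetric[of k "Suc (m + k)"] by (simp add: add.commute)
    finally show ?thesis .
  qed
  have "(\<Sum>k. ?a k) = (1 / (1 - x)) ^ (m + 1)" using Suc.IH by (simp add: sums_iff)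
  moreover have "(\<Sum>k. ?b k) = 1 / (1 - x)" using geometric_sums[of x] x by (simp add: sums_iff)
  ultimately show ?case using cp unfolding eq by (simp add: power_Suc2 mult_ac)
qed

lemma pow_le_fact_choose: "real N ^ m \<le> fact m * real ((N + m) choose m)"
proof (induction m)
  case 0 then show ?case by simp
next
  case (Suc m)
  have id: "real (Suc (N + m)) * real ((N + m) choose m) = real ((Suc (N + m)) choose Suc m) * real (Suc m)"
    using Suc_times_binomial_eq[of "N + m" m] by (metis of_nat_mult)
  have "real N ^ Suc m = real N * real N ^ m" by simp
  also have "\<dots> \<le> real (Suc (N + m)) * (fact m * real ((N + m) choose m))"
    by (rule mult_mono) (use Suc.IH in auto)
  also have "\<dots> = fact m * (real (Suc (N + m)) * real ((N + m) choose m))" by simp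
  also have "\<dots> = fact (Suc m) * real ((N + Suc m) choose Suc m)"
    unfolding id by simp
  finally show ?case .
qed

lemma poly_geom_bound:
  fixes x :: real assumes x: "0 < x" "x < 1"
  shows "summable (\<lambda>n. x ^ n * (real n + real K) ^ m)"
    and "(\<Sum>n. x ^ n * (real n + real K) ^ m) \<le> fact m / (x ^ K * (1 - x) ^ (m + 1))"
proof -
  define b where "b n = real ((n + m) choose m) * x ^ n" for n
  have bs: "b sums ((1 / (1 - x)) ^ (m + 1))" unfolding b_def using negbin_sums x by simp
  then have sb: "summable b" by (simp add: sums_iff)
  have sbK: "summable (\<lambda>n. b (n + K))" using sb by (simp add: summable_iff_shift)
  have bnn: "b n \<ge> 0" for n unfolding b_def using x by simp
  have "(\<Sum>n. b (n + K)) = (\<Sum>n. b n) - (\<Sum>i<K. b i)" by (rule suminf_minus_initial_segment[OF sb])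
  also have "\<dots> \<le> (\<Sum>n. b n)" using bnn by (simp add: sum_nonneg)
  also have "\<dots> = (1 / (1 - x)) ^ (m + 1)" using bs by (simp add: sums_iff)
  finally have bK: "(\<Sum>n. b (n + K)) \<le> (1 / (1 - x)) ^ (m + 1)" .
  define g where "g n = fact m / x ^ K * b (n + K)" for n
  have sg: "summable g" unfolding g_def by (intro summable_mult sbK)
  have fg: "x ^ n * (real n + real K) ^ m \<le> g n" for n
  proof -
    have "(real n + real K) ^ m = real (n + K) ^ m" by simp
    also have "\<dots> \<le> fact m * real ((n + K + m) choose m)" by (rule pow_le_fact_choose)
    finally have *: "(real n + real K) ^ m \<le> fact m * real ((n + K + m) choose m)" .
    have "g n = fact m * real ((n + K + m) choose m) * (x ^ (n + K) / x ^ K)"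
      unfolding g_def b_def by simp
    also have "x ^ (n + K) / x ^ K = x ^ n" using x by (simp add: power_add)
    finally have "g n = fact m * real ((n + K + m) choose m) * x ^ n" .
    then show ?thesis using * x by (simp add: mult_left_mono mult.commute)
  qed
  have fnn: "0 \<le> x ^ n * (real n + real K) ^ m" for n using x by simp
  show sf: "summable (\<lambda>n. x ^ n * (real n + real K) ^ m)"
    by (rule summable_comparison_test[OF _ sg]) (use fg fnn in auto)
  have "(\<Sum>n. x ^ n * (real n + real K) ^ m) \<le> (\<Sum>n. g n)"
    by (rule suminf_le[OF fg sf sg])
  also have "(\<Sum>n. g n) = fact m / x ^ K * (\<Sum>n. b (n + K))"
    unfolding g_def by (rule suminf_mult[OF sbK])
  also have "\<dots> \<le> fact m / x ^ K * (1 / (1 - x)) ^ (m + 1)"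
    by (rule mult_left_mono[OF bK]) (use x in simp)
  also have "\<dots> = fact m / (x ^ K * (1 - x) ^ (m + 1))" by (simp add: power_one_over)
  finally show "(\<Sum>n. x ^ n * (real n + real K) ^ m) \<le> fact m / (x ^ K * (1 - x) ^ (m + 1))" .
qed

definition bterm :: "real \<Rightarrow> real \<Rightarrow> nat \<Rightarrow> nat \<Rightarrow> nat \<Rightarrow> real" where
  "bterm s h K m n = exp (-h) ^ n *
     (((1 - s) * (real n + real K) * h) ^ m / fact m * h
      + (\<Sum>i<m. ((real n + real K) * h) ^ i / fact i * h\<^sup>2))"

definition Fb :: "real \<Rightarrow> real \<Rightarrow> nat \<Rightarrow> nat \<Rightarrow> real" where
  "Fb s h K m = (1 - s) ^ m * exp (h * K) * (h / (1 - exp (-h))) ^ (m + 1)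
     + h * (\<Sum>i<m. exp (h * K) * (h / (1 - exp (-h))) ^ (i + 1))"

lemma bterm_sum:
  assumes h: "h > 0" and s: "s \<le> 1"
  shows "summable (bterm s h K m)" "(\<Sum>n. bterm s h K m n) \<le> Fb s h K m"
proof -
  define x where "x = exp (-h)"
  have x: "0 < x" "x < 1" unfolding x_def using h by auto
  let ?p = "\<lambda>i n. x ^ n * (real n + real K) ^ i"
  have sp: "summable (?p i)" for i using poly_geom_bound(1)[OF x] .
  have bp: "(\<Sum>n. ?p i n) \<le> fact i / (x ^ K * (1 - x) ^ (i + 1))" for i
    using poly_geom_bound(2)[OF x] .
  have beq: "bterm s h K m n = ((1 - s) * h) ^ m / fact m * h * ?p m n
      + (\<Sum>i<m. h ^ i / fact i * h\<^sup>2 * ?p i n)" for n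
  proof -
    have e1: "((1 - s) * (real n + real K) * h) ^ m = ((1 - s) * h) ^ m * (real n + real K) ^ m"
      by (metis mult.commute mult.left_commute power_mult_distrib)
    have e2: "((real n + real K) * h) ^ i = h ^ i * (real n + real K) ^ i" for i
      by (simp add: power_mult_distrib mult.commute)
    show ?thesis
      unfolding bterm_def x_def e1 e2 by (simp only: distrib_left sum_distrib_left) (simp add: mult_ac)
  qed
  have s1: "summable (\<lambda>n. ((1 - s) * h) ^ m / fact m * h * ?p m n)"
    by (intro summable_mult sp)
  have s2: "summable (\<lambda>n. \<Sum>i<m. h ^ i / fact i * h\<^sup>2 * ?p i n)"
    by (intro summable_sum summable_mult sp)
  show sb: "summable (bterm s h K m)" unfolding beq by (intro summable_add s1 s2)
  have "(\<Sum>n. bterm s h K m n) = (\<Sum>n. ((1 - s) * h) ^ m / fact m * h * ?p m n)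
        + (\<Sum>n. \<Sum>i<m. h ^ i / fact i * h\<^sup>2 * ?p i n)"
    unfolding beq by (rule suminf_add[OF s1 s2, symmetric])
  also have "(\<Sum>n. ((1 - s) * h) ^ m / fact m * h * ?p m n) = ((1 - s) * h) ^ m / fact m * h * (\<Sum>n. ?p m n)"
    by (rule suminf_mult[OF sp])
  also have "(\<Sum>n. \<Sum>i<m. h ^ i / fact i * h\<^sup>2 * ?p i n) = (\<Sum>i<m. \<Sum>n. h ^ i / fact i * h\<^sup>2 * ?p i n)"
    by (rule suminf_sum) (intro summable_mult sp)
  also have "\<dots> = (\<Sum>i<m. h ^ i / fact i * h\<^sup>2 * (\<Sum>n. ?p i n))"
    by (intro sum.cong refl suminf_mult sp)
  also have "((1 - s) * h) ^ m / fact m * h * (\<Sum>n. ?p m n) + (\<Sum>i<m. h ^ i / fact i * h\<^sup>2 * (\<Sum>n. ?p i n))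
      \<le> ((1 - s) * h) ^ m / fact m * h * (fact m / (x ^ K * (1 - x) ^ (m + 1)))
        + (\<Sum>i<m. h ^ i / fact i * h\<^sup>2 * (fact i / (x ^ K * (1 - x) ^ (i + 1))))"
    using h s by (intro add_mono mult_left_mono sum_mono bp) auto
  also have "\<dots> = Fb s h K m"
  proof -
    have xK: "1 / x ^ K = exp (h * K)" unfolding x_def
      by (simp add: exp_of_nat_mult[symmetric] exp_minus field_simps power_inverse)
    have a: "((1 - s) * h) ^ m / fact m * h * (fact m / (x ^ K * (1 - x) ^ (m + 1)))
        = (1 - s) ^ m * (1 / x ^ K) * (h / (1 - x)) ^ (m + 1)"
      using x by (simp add: power_mult_distrib power_divide)
    have b: "h ^ i / fact i * h\<^sup>2 * (fact i / (x ^ K * (1 - x) ^ (i + 1)))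
        = h * ((1 / x ^ K) * (h / (1 - x)) ^ (i + 1))" for i
      using x by (simp add: field_simps power2_eq_square)
    show ?thesis unfolding a b unfolding sum_distrib_left[symmetric] unfolding xK
      unfolding Fb_def x_def by (simp add: sum_distrib_left)
  qed
  finally show "(\<Sum>n. bterm s h K m n) \<le> Fb s h K m" .
qed

lemma Fb_tendsto: "((\<lambda>h. Fb s h K m) \<longlongrightarrow> (1 - s) ^ m) (at_right 0)"
proof -
  have q: "((\<lambda>h::real. h / (1 - exp (-h))) \<longlongrightarrow> 1) (at_right 0)" by real_asymp
  have e: "((\<lambda>h::real. exp (h * K)) \<longlongrightarrow> 1) (at_right 0)"
    by (rule tendsto_eq_intros refl)+ (auto intro!: tendsto_eq_intros)
  have i: "((\<lambda>h::real. h) \<longlongrightarrow> 0) (at_right 0)" by (rule tendsto_ident_at)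
  have "((\<lambda>h. Fb s h K m) \<longlongrightarrow> (1 - s) ^ m * 1 * 1 ^ (m + 1) + 0 * (\<Sum>i<m. 1 * 1 ^ (i + 1))) (at_right 0)"
    unfolding Fb_def by (intro tendsto_intros q e i)
  then show ?thesis by simp
qed

lemma measure_cball2: "r \<ge> 0 \<Longrightarrow> measure lborel (cball (0::real^2) r) = unit_ball_vol 2 * r\<^sup>2"
  using content_cball[of r "0::real^2"] by simp

lemma ppp_AE_no0:
  assumes ppp: "poisson_point_process M Phi lam"
  shows "AE \<omega> in M. 0 \<notin> Phi \<omega>"
proof -
  interpret prob_space M using ppp_prob_space[OF ppp] .
  have B: "{0::real^2} \<in> sets lborel" "bounded {0::real^2}" by auto
  have m0: "measure lborel {0::real^2} = 0" by simp
  have "prob {\<omega>\<in>space M. card (Phi \<omega> \<inter> {0}) = 0} = 1"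
    using ppp_prob[OF ppp B, of 0] m0 by simp
  then have "AE \<omega> in M. \<omega> \<in> {\<omega>\<in>space M. card (Phi \<omega> \<inter> {0}) = 0}" by (rule AE_prob_1)
  then show ?thesis
  proof (rule AE_mp, intro AE_I2 impI)
    fix \<omega> assume \<omega>: "\<omega> \<in> space M" and "\<omega> \<in> {\<omega>\<in>space M. card (Phi \<omega> \<inter> {0}) = 0}"
    then have c: "card (Phi \<omega> \<inter> {0}) = 0" by simp
    have "finite (Phi \<omega> \<inter> {0})" by simp
    then have "Phi \<omega> \<inter> {0} = {}" using c by simp
    then show "0 \<notin> Phi \<omega>" by auto
  qed
qed

lemma ppp_AE_inf:
  assumes ppp: "poisson_point_process M Phi lam" and lam: "lam > 0"
  shows "AE \<omega> in M. \<forall>n. \<exists>R. n \<le> card (Phi \<omega> \<inter> cball 0 R)"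
proof -
  interpret prob_space M using ppp_prob_space[OF ppp] .
  define c where "c = lam * unit_ball_vol 2"
  have c: "c > 0" unfolding c_def using lam by simp
  have Bj: "cball (0::real^2) (real j) \<in> sets lborel" "bounded (cball (0::real^2) (real j))" for j
    by auto
  have mu: "lam * measure lborel (cball (0::real^2) (real j)) = c * real j ^ 2" for j
    using measure_cball2[of "real j"] unfolding c_def by simp
  have "AE \<omega> in M. \<exists>j::nat. n \<le> card (Phi \<omega> \<inter> cball 0 (real j))" for n
  proof -
    let ?A = "\<lambda>j. {\<omega>\<in>space M. card (Phi \<omega> \<inter> cball 0 (real j)) \<in> {..<n}}"
    define Z where "Z = (\<Inter>j. ?A j)"
    have AS: "?A j \<in> sets M" for j by (rule ppp_sets[OF ppp Bj])
    have Zs: "Z \<in> sets M" unfolding Z_def using AS by (intro sets.countable_INT) auto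
    define a where "a j = (\<Sum>k<n. (c * real j ^ 2) ^ k / fact k * exp (- (c * real j ^ 2)))" for j :: nat
    have ZA: "measure M Z \<le> a j" for j
    proof -
      have "measure M Z \<le> measure M (?A j)"
        unfolding Z_def by (rule finite_measure_mono) (use AS in auto)
      also have "?A j = (\<Union>k\<in>{..<n}. {\<omega>\<in>space M. card (Phi \<omega> \<inter> cball 0 (real j)) = k})" by auto
      also have "measure M \<dots> \<le> (\<Sum>k<n. measure M {\<omega>\<in>space M. card (Phi \<omega> \<inter> cball 0 (real j)) = k})"
        by (rule measure_UNION_le) (use ppp_sets_eq[OF ppp Bj] in auto)
      also have "\<dots> = a j" unfolding a_def using ppp_prob[OF ppp Bj] mu by simp
      finally show ?thesis .
    qed
    have lim: "a \<longlonglongrightarrow> 0"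
    proof -
      have f: "filterlim (\<lambda>j::nat. c * real j ^ 2) at_top sequentially"
        using c by real_asymp
      have "((\<lambda>j. ((c * real j ^ 2) ^ k / exp (c * real j ^ 2)) / fact k) \<longlonglongrightarrow> 0 / fact k)" for k
        by (intro tendsto_divide filterlim_compose[OF tendsto_power_div_exp_0 f] tendsto_const) simp
      then have "((\<lambda>j. (c * real j ^ 2) ^ k / fact k * exp (- (c * real j ^ 2))) \<longlonglongrightarrow> 0)" for k
        by (simp add: exp_minus field_simps)
      then show ?thesis unfolding a_def by (intro tendsto_null_sum)
    qed
    have "measure M Z \<le> 0" by (rule LIMSEQ_le_const[OF lim]) (use ZA in auto)
    then have "measure M Z = 0" using measure_nonneg[of M Z] by linarith
    then have "Z \<in> null_sets M" using Zs by (simp add: null_sets_def emeasure_eq_measure)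
    then show ?thesis
      by (rule AE_I') (auto simp: Z_def not_le)
  qed
  then have "AE \<omega> in M. \<forall>n. \<exists>j::nat. n \<le> card (Phi \<omega> \<inter> cball 0 (real j))"
    by (simp add: AE_all_countable)
  then show ?thesis by (rule AE_mp) (auto intro!: AE_I2)
qed

lemma poisson_mean_sums:
  fixes \<mu> :: real
  shows "(\<lambda>k. real k * (\<mu> ^ k / fact k * exp (- \<mu>))) sums \<mu>"
proof -
  have e: "(\<lambda>k. \<mu> ^ k / fact k) sums exp \<mu>"
    using exp_converges[of \<mu>] by (simp add: divide_inverse mult.commute)
  have "(\<lambda>k. (\<mu> * exp (- \<mu>)) * (\<mu> ^ k / fact k)) sums ((\<mu> * exp (- \<mu>)) * exp \<mu>)"
    by (rule sums_mult[OF e])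
  moreover have "(\<mu> * exp (- \<mu>)) * exp \<mu> = \<mu>" by (simp add: exp_minus)
  moreover have "(\<lambda>k. (\<mu> * exp (- \<mu>)) * (\<mu> ^ k / fact k)) = (\<lambda>k. real (Suc k) * (\<mu> ^ Suc k / fact (Suc k) * exp (- \<mu>)))"
    by (rule ext) (simp add: field_simps del: of_nat_Suc)
  ultimately have "(\<lambda>k. real (Suc k) * (\<mu> ^ Suc k / fact (Suc k) * exp (- \<mu>))) sums \<mu>" by metis
  then show ?thesis by (subst (asm) sums_Suc_iff) simp
qed

lemma ppp_nn_mean:
  assumes ppp: "poisson_point_process M Phi lam" and B: "B \<in> sets lborel" "bounded B"
  shows "(\<integral>\<^sup>+\<omega>. ennreal (real (card (Phi \<omega> \<inter> B))) \<partial>M) = ennreal (lam * measure lborel B)"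
proof -
  interpret prob_space M using ppp_prob_space[OF ppp] .
  define \<mu> where "\<mu> = lam * measure lborel B"
  let ?A = "\<lambda>k. {\<omega>\<in>space M. card (Phi \<omega> \<inter> B) = k}"
  have AS: "?A k \<in> sets M" for k by (rule ppp_sets_eq[OF ppp B])
  have pt: "ennreal (real (card (Phi \<omega> \<inter> B))) = (\<Sum>k. ennreal (real k) * indicator (?A k) \<omega>)"
    if "\<omega> \<in> space M" for \<omega>
  proof -
    have "(\<lambda>k. if k = card (Phi \<omega> \<inter> B) then ennreal (real k) else 0) sums ennreal (real (card (Phi \<omega> \<inter> B)))"
      by (rule sums_single)
    moreover have "(\<lambda>k. if k = card (Phi \<omega> \<inter> B) then ennreal (real k) else 0) = (\<lambda>k. ennreal (real k) * indicator (?A k) \<omega>)"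
      using that by (auto simp: indicator_def)
    ultimately show ?thesis by (simp add: sums_iff)
  qed
  have "(\<integral>\<^sup>+\<omega>. ennreal (real (card (Phi \<omega> \<inter> B))) \<partial>M) = (\<integral>\<^sup>+\<omega>. (\<Sum>k. ennreal (real k) * indicator (?A k) \<omega>) \<partial>M)"
    by (rule nn_integral_cong) (use pt in auto)
  also have "\<dots> = (\<Sum>k. \<integral>\<^sup>+\<omega>. ennreal (real k) * indicator (?A k) \<omega> \<partial>M)"
    by (rule nn_integral_suminf) (use AS in auto)
  also have "\<dots> = (\<Sum>k. ennreal (real k) * emeasure M (?A k))"
    by (subst nn_integral_cmult_indicator[OF AS]) simp
  also have "\<dots> = (\<Sum>k. ennreal (real k * (\<mu> ^ k / fact k * exp (- \<mu>))))"
  proof (rule suminf_cong)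
    fix k
    have p: "prob (?A k) = \<mu> ^ k / fact k * exp (- \<mu>)" unfolding \<mu>_def by (rule ppp_prob[OF ppp B])
    have "\<mu> ^ k / fact k * exp (- \<mu>) \<ge> 0" using p measure_nonneg by metis
    moreover have "ennreal (real k * (\<mu> ^ k / fact k * exp (- \<mu>))) = ennreal (real k) * ennreal (\<mu> ^ k / fact k * exp (- \<mu>))"
      by (rule ennreal_mult') simp
    ultimately show "ennreal (real k) * emeasure M (?A k) = ennreal (real k * (\<mu> ^ k / fact k * exp (- \<mu>)))"
      by (simp only: emeasure_eq_measure p)
  qed
  also have "\<dots> = ennreal (\<Sum>k. real k * (\<mu> ^ k / fact k * exp (- \<mu>)))"
  proof (rule suminf_ennreal2)
    show "summable (\<lambda>k. real k * (\<mu> ^ k / fact k * exp (- \<mu>)))"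
      using poisson_mean_sums by (rule sums_summable)
    fix k
    have "prob (?A k) = \<mu> ^ k / fact k * exp (- \<mu>)" unfolding \<mu>_def by (rule ppp_prob[OF ppp B])
    then have "\<mu> ^ k / fact k * exp (- \<mu>) \<ge> 0" using measure_nonneg by metis
    then show "0 \<le> real k * (\<mu> ^ k / fact k * exp (- \<mu>))" by (rule mult_nonneg_nonneg[rotated]) simp
  qed
  also have "(\<Sum>k. real k * (\<mu> ^ k / fact k * exp (- \<mu>))) = \<mu>"
    using poisson_mean_sums by (rule sums_unique[symmetric])
  finally show ?thesis unfolding \<mu>_def .
qed

lemma kd_summable:
  fixes S :: "(real^2) set" and b \<alpha> C :: real
  assumes lf: "locfin S" and z: "0 \<notin> S" and inf: "\<forall>n. \<exists>R. n \<le> card (S \<inter> cball 0 R)"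
    and b: "0 < b" "b < \<alpha>"
    and gr: "\<forall>j::nat. (2 powr - b) ^ j * real (card (S \<inter> cball 0 (2 ^ j))) \<le> C"
  shows "summable (\<lambda>n. kth_dist S (n + 1) powr - \<alpha>)"
proof -
  define N0 where "N0 = card (S \<inter> cball 0 1)"
  define g where "g n = (C * 2 powr b) powr (\<alpha> / b) * real (n + 1) powr (- \<alpha> / b)" for n
  have sg: "summable g"
  proof -
    have "summable (\<lambda>n. real n powr (- \<alpha> / b))"
      using b by (subst summable_real_powr_iff) (simp add: field_simps)
    then have "summable (\<lambda>n. real (n + 1) powr (- \<alpha> / b))"
      using summable_iff_shift[of "\<lambda>m. real m powr (- \<alpha> / b)" 1] by simp
    then show ?thesis unfolding g_def by (rule summable_mult)
  qed
  show ?thesis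
  proof (rule summable_comparison_test'[OF sg])
    fix n assume n: "n \<ge> N0"
    define d where "d = kth_dist S (n + 1)"
    have ex: "\<exists>R. n + 1 \<le> card (S \<inter> cball 0 R)" using inf by blast
    have dpos: "d > 0" unfolding d_def by (rule kd_pos[OF lf z _ ex]) simp
    have d1: "d \<ge> 1"
    proof (rule ccontr)
      assume "\<not> d \<ge> 1"
      then have "n + 1 \<le> card (S \<inter> cball 0 1)"
        using kd_lessD'[OF lf _ ex, of 1] unfolding d_def by simp
      then show False using n unfolding N0_def by simp
    qed
    have exj: "\<exists>j::nat. d < 2 ^ j" using real_arch_pow[of 2 d] by auto
    define j where "j = (LEAST j::nat. d < 2 ^ j)"
    have dj: "d < 2 ^ j" unfolding j_def by (rule LeastI_ex[OF exj])
    have j0: "j \<noteq> 0"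
    proof
      assume "j = 0" then show False using dj d1 by simp
    qed
    have dj1: "2 ^ (j - 1) \<le> d"
    proof -
      have "\<not> d < 2 ^ (j - 1)" unfolding j_def by (rule not_less_Least) (use j0 j_def in auto)
      then show ?thesis by simp
    qed
    have jle: "(2::real) ^ j \<le> 2 * d"
    proof -
      have "(2::real) ^ j = 2 * 2 ^ (j - 1)" using j0 by (cases j) auto
      then show ?thesis using dj1 by simp
    qed
    have cn: "n + 1 \<le> card (S \<inter> cball 0 (2 ^ j))"
      using kd_lessD'[OF lf _ ex, of "2 ^ j"] dj unfolding d_def by simp
    have rj: "(2 powr - b) ^ j = 1 / ((2 ^ j) powr b)"
      by (simp add: powr_minus powr_power[symmetric] powr_realpow[symmetric] powr_powr mult.commute power_inverse divide_inverse)
    have "(2 powr - b) ^ j * real (n + 1) \<le> C"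
      using gr[rule_format, of j] cn
      by (meson less_eq_real_def mult_left_mono of_nat_le_iff order_trans zero_le_power powr_ge_zero)
    then have c1: "real (n + 1) \<le> C * (2 ^ j) powr b"
      unfolding rj by (simp add: field_simps)
    have C0: "0 \<le> C"
    proof (rule ccontr)
      assume "\<not> 0 \<le> C"
      then have "C * (2 ^ j) powr b \<le> 0" by (simp add: mult_nonpos_nonneg)
      then show False using c1 by simp
    qed
    have c2: "C * (2 ^ j) powr b \<le> C * (2 * d) powr b"
      by (rule mult_left_mono[OF _ C0]) (use jle b in \<open>intro powr_mono2, auto\<close>)
    have c3: "C * (2 * d) powr b = (C * 2 powr b) * d powr b" using dpos by (simp add: powr_mult)
    from c1 c2 c3 have "real (n + 1) \<le> C * 2 powr b * d powr b" by simp
    then have h: "real (n + 1) \<le> C * 2 powr b * d powr b" .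
    have Cp: "C * 2 powr b > 0"
    proof -
      have "0 < real (n+1)" by simp
      then have "0 < C * 2 powr b * d powr b" using h by linarith
      then show ?thesis using dpos by (simp add: zero_less_mult_iff)
    qed
    have q: "real (n + 1) / (C * 2 powr b) \<le> d powr b"
      using h Cp by (simp add: field_simps)
    have qpos: "0 < real (n + 1) / (C * 2 powr b)"
      using Cp by simp
    have "d powr - \<alpha> = (d powr b) powr (- \<alpha> / b)"
      using b by (simp add: powr_powr)
    also have "\<dots> \<le> (real (n + 1) / (C * 2 powr b)) powr (- \<alpha> / b)"
      by (rule powr_mono2') (use b qpos q in \<open>auto simp: divide_nonpos_pos\<close>)
    also have "\<dots> = g n"
    proof -
      let ?X = "real (n + 1)" and ?Y = "C * 2 powr b"
      have "(?X / ?Y) powr (- \<alpha> / b) = ?X powr (- \<alpha> / b) / ?Y powr (- \<alpha> / b)"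
        by (rule powr_divide)
      also have "?Y powr (- \<alpha> / b) = inverse (?Y powr (\<alpha> / b))"
      proof -
        have e: "- \<alpha> / b = - (\<alpha> / b)" by simp
        show ?thesis unfolding e by (rule powr_minus)
      qed
      finally have "(?X / ?Y) powr (- \<alpha> / b) = ?X powr (- \<alpha> / b) * ?Y powr (\<alpha> / b)"
        by (simp only: divide_inverse inverse_inverse_eq)
      then show ?thesis unfolding g_def by (simp only: mult.commute)
    qed
    finally show "norm (kth_dist S (n + 1) powr - \<alpha>) \<le> g n" unfolding d_def by simp
  qed
qed

lemma ppp_AE_growth:
  assumes ppp: "poisson_point_process M Phi lam" and lam: "lam > 0" and b: "b > 2"
  shows "AE \<omega> in M. \<exists>C. \<forall>j::nat. (2 powr - b) ^ j * real (card (Phi \<omega> \<inter> cball 0 (2 ^ j))) \<le> C"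
proof -
  interpret prob_space M using ppp_prob_space[OF ppp] .
  define r where "r = (2::real) powr - b"
  have r0: "r > 0" unfolding r_def by simp
  have r4: "4 * r < 1"
  proof -
    have "4 * r = 2 powr 2 * 2 powr - b" unfolding r_def by simp
    also have "\<dots> = 2 powr (2 + - b)" by (rule powr_add[symmetric])
    also have "\<dots> = 2 powr (2 - b)" by simp
    also have "\<dots> < 1" using b by (intro powr_less_one) auto
    finally show ?thesis .
  qed
  define c where "c = lam * unit_ball_vol 2"
  have c0: "c > 0" unfolding c_def using lam by simp
  have Bj: "cball (0::real^2) (2 ^ j) \<in> sets lborel" "bounded (cball (0::real^2) (2 ^ j))" for j :: nat
    by auto
  define f where "f j \<omega> = ennreal (r ^ j * real (card (Phi \<omega> \<inter> cball 0 (2 ^ j))))" for j :: nat and \<omega>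
  have fm: "f j \<in> borel_measurable M" for j
  proof -
    have "(\<lambda>k::nat. ennreal (r ^ j * real k)) \<in> measurable (count_space UNIV) borel"
      by simp
    from measurable_compose[OF ppp_meas[OF ppp Bj] this] show ?thesis unfolding f_def by simp
  qed
  have int_f: "(\<integral>\<^sup>+\<omega>. f j \<omega> \<partial>M) = ennreal (c * (4 * r) ^ j)" for j
  proof -
    have "(\<integral>\<^sup>+\<omega>. f j \<omega> \<partial>M) = (\<integral>\<^sup>+\<omega>. ennreal (r ^ j) * ennreal (real (card (Phi \<omega> \<inter> cball 0 (2 ^ j)))) \<partial>M)"
      unfolding f_def using r0 by (intro nn_integral_cong) (simp add: ennreal_mult')
    also have "\<dots> = ennreal (r ^ j) * (\<integral>\<^sup>+\<omega>. ennreal (real (card (Phi \<omega> \<inter> cball 0 (2 ^ j)))) \<partial>M)"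
    proof (rule nn_integral_cmult)
      have "(\<lambda>k::nat. ennreal (real k)) \<in> measurable (count_space UNIV) borel"
        by simp
      from measurable_compose[OF ppp_meas[OF ppp Bj] this] show "(\<lambda>\<omega>. ennreal (real (card (Phi \<omega> \<inter> cball 0 (2 ^ j))))) \<in> borel_measurable M" by simp
    qed
    also have "(\<integral>\<^sup>+\<omega>. ennreal (real (card (Phi \<omega> \<inter> cball 0 (2 ^ j)))) \<partial>M) = ennreal (lam * measure lborel (cball (0::real^2) (2 ^ j)))"
      by (rule ppp_nn_mean[OF ppp Bj])
    also have "lam * measure lborel (cball (0::real^2) (2 ^ j)) = c * 4 ^ j"
    proof -
      have "((2::real) ^ j)\<^sup>2 = 4 ^ j" by (simp add: power2_eq_square power_mult_distrib[symmetric])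
      then show ?thesis using measure_cball2[of "2 ^ j"] unfolding c_def by simp
    qed
    also have "ennreal (r ^ j) * ennreal (c * 4 ^ j) = ennreal (c * (4 * r) ^ j)"
      using r0 c0 by (simp add: ennreal_mult'[symmetric] power_mult_distrib mult_ac)
    finally show ?thesis .
  qed
  have "(\<integral>\<^sup>+\<omega>. (\<Sum>j. f j \<omega>) \<partial>M) = (\<Sum>j. \<integral>\<^sup>+\<omega>. f j \<omega> \<partial>M)"
    by (rule nn_integral_suminf[OF fm])
  also have "\<dots> = (\<Sum>j. ennreal (c * (4 * r) ^ j))" by (simp add: int_f)
  also have "\<dots> = ennreal (\<Sum>j. c * (4 * r) ^ j)"
  proof (rule suminf_ennreal2)
    show "summable (\<lambda>j. c * (4 * r) ^ j)"
      using r0 r4 by (intro summable_mult summable_geometric) simp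
  qed (use r0 c0 in simp)
  finally have "(\<integral>\<^sup>+\<omega>. (\<Sum>j. f j \<omega>) \<partial>M) \<noteq> \<infinity>" by simp
  then have "AE \<omega> in M. (\<Sum>j. f j \<omega>) \<noteq> \<infinity>"
    by (intro nn_integral_PInf_AE) (use fm in measurable)
  then show ?thesis
  proof (rule AE_mp, intro AE_I2 impI)
    fix \<omega> assume fin: "(\<Sum>j. f j \<omega>) \<noteq> \<infinity>"
    let ?a = "\<lambda>j. r ^ j * real (card (Phi \<omega> \<inter> cball 0 (2 ^ j)))"
    have a0: "0 \<le> ?a j" for j using r0 by simp
    have sa: "summable ?a"
      by (rule summable_suminf_not_top[OF a0]) (use fin in \<open>simp add: f_def\<close>)
    have "?a j \<le> suminf ?a" for j
      using sum_le_suminf[OF sa, of "{j}"] a0 by simp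
    then show "\<exists>C. \<forall>j::nat. (2 powr - b) ^ j * real (card (Phi \<omega> \<inter> cball 0 (2 ^ j))) \<le> C"
      unfolding r_def by blast
  qed
qed

lemma R_sq:
  assumes "lam > 0" "t \<ge> 0"
  shows "lam * measure lborel (ball (0::real^2) (sqrt (t / (lam * unit_ball_vol 2)))) = t"
proof -
  have V: "unit_ball_vol 2 > 0" by simp
  have "measure lborel (ball (0::real^2) (sqrt (t / (lam * unit_ball_vol 2))))
      = unit_ball_vol 2 * (sqrt (t / (lam * unit_ball_vol 2)))\<^sup>2"
    by (rule measure_ball2) (use assms V in simp)
  also have "(sqrt (t / (lam * unit_ball_vol 2)))\<^sup>2 = t / (lam * unit_ball_vol 2)"
    using assms V by simp
  finally show ?thesis using assms V by (simp add: field_simps)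
qed

lemma R_mono:
  assumes "lam > 0" "t1 \<le> t2"
  shows "sqrt (t1 / (lam * unit_ball_vol 2)) \<le> sqrt (t2 / (lam * unit_ball_vol 2))"
  using assms by (intro real_sqrt_le_mono divide_right_mono) auto

lemma En_prob:
  fixes n m L :: nat and h lam :: real
  assumes ppp: "poisson_point_process M Phi lam" and lam: "lam > 0" and h: "h > 0"
    and mn: "m \<le> n" and L: "L \<ge> 1"
  defines "R \<equiv> \<lambda>t. sqrt (t / (lam * unit_ball_vol 2))"
  defines "D1 \<equiv> ball (0::real^2) (R (real m * h))"
  defines "D2 \<equiv> ball (0::real^2) (R (real n * h)) - D1"
  defines "D3 \<equiv> ball (0::real^2) (R ((real n + 1) * h)) - ball 0 (R (real n * h))"
  defines "En \<equiv> (\<Union>i<L. {\<omega>\<in>space M. card (Phi \<omega> \<inter> D1) \<in> {0}}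
       \<inter> {\<omega>\<in>space M. card (Phi \<omega> \<inter> D2) \<in> {i}} \<inter> {\<omega>\<in>space M. card (Phi \<omega> \<inter> D3) \<in> {L - i..}})"
  shows "En \<in> sets M"
    "measure M En \<le> exp (- h) ^ n * (((real n - real m) * h) ^ (L - 1) / fact (L - 1) * h
        + (\<Sum>i<L - 1. ((real n - real m) * h) ^ i / fact i * h\<^sup>2))"
proof -
  interpret prob_space M using ppp_prob_space[OF ppp] .
  have R0: "R t \<ge> 0" if "t \<ge> 0" for t unfolding R_def using that lam by simp
  have Rm: "R (real m * h) \<le> R (real n * h)" unfolding R_def
    using mn h lam by (intro R_mono) (auto intro: mult_right_mono)
  have Rn: "R (real n * h) \<le> R ((real n + 1) * h)" unfolding R_def
    using h lam by (intro R_mono) (auto intro: mult_right_mono)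
  have bs: "ball (0::real^2) r \<in> sets lborel" for r by (simp add: borel_open)
  have D1s: "D1 \<in> sets lborel" "bounded D1" unfolding D1_def by (auto simp: bs)
  have D2s: "D2 \<in> sets lborel" "bounded D2" unfolding D2_def D1_def
    by (auto simp: bs intro: bounded_subset[OF bounded_ball])
  have D3s: "D3 \<in> sets lborel" "bounded D3" unfolding D3_def
    by (auto simp: bs intro: bounded_subset[OF bounded_ball])
  have mu1: "lam * measure lborel D1 = real m * h" unfolding D1_def R_def
    using lam h by (intro R_sq) auto
  have mu2: "lam * measure lborel D2 = (real n - real m) * h"
  proof -
    have sub: "D1 \<subseteq> ball 0 (R (real n * h))" unfolding D1_def using Rm by (rule subset_ball)
    have "measure lborel D2 = measure lborel (ball (0::real^2) (R (real n * h))) - measure lborel D1"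
      unfolding D2_def
    proof (rule measure_Diff)
      show "emeasure lborel (ball (0::real^2) (R (real n * h))) \<noteq> \<infinity>"
        using emeasure_ball[of "R (real n * h)" "0::real^2"] R0[of "real n * h"] h by simp
    qed (use sub bs D1s in auto)
    then have "lam * measure lborel D2 = lam * measure lborel (ball (0::real^2) (R (real n * h))) - lam * measure lborel D1"
      by (simp add: right_diff_distrib)
    also have "lam * measure lborel (ball (0::real^2) (R (real n * h))) = real n * h"
      unfolding R_def using lam h by (intro R_sq) auto
    finally show ?thesis using mu1 by (simp add: algebra_simps)
  qed
  have mu3: "lam * measure lborel D3 = h"
  proof -
    have sub: "ball (0::real^2) (R (real n * h)) \<subseteq> ball 0 (R ((real n + 1) * h))" using Rn by (rule subset_ball)
    have "measure lborel D3 = measure lborel (ball (0::real^2) (R ((real n + 1) * h))) - measure lborel (ball (0::real^2) (R (real n * h)))"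
      unfolding D3_def
    proof (rule measure_Diff)
      show "emeasure lborel (ball (0::real^2) (R ((real n + 1) * h))) \<noteq> \<infinity>"
        using emeasure_ball[of "R ((real n + 1) * h)" "0::real^2"] R0[of "(real n + 1) * h"] h by simp
    qed (use sub bs in auto)
    then have "lam * measure lborel D3 = lam * measure lborel (ball (0::real^2) (R ((real n + 1) * h))) - lam * measure lborel (ball (0::real^2) (R (real n * h)))"
      by (simp add: right_diff_distrib)
    also have "lam * measure lborel (ball (0::real^2) (R ((real n + 1) * h))) = (real n + 1) * h"
      unfolding R_def using lam h by (intro R_sq) auto
    also have "lam * measure lborel (ball (0::real^2) (R (real n * h))) = real n * h"
      unfolding R_def using lam h by (intro R_sq) auto
    finally show ?thesis by (simp add: algebra_simps)
  qed
  let ?E = "\<lambda>B A. {\<omega>\<in>space M. card (Phi \<omega> \<inter> B) \<in> A}"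
  have Es: "?E B A \<in> sets M" if "B \<in> sets lborel" "bounded B" for B A
    by (rule ppp_sets[OF ppp that])
  show Ens: "En \<in> sets M" unfolding En_def
    by (intro sets.finite_UN finite_lessThan sets.Int Es[OF D1s(1) D1s(2)] Es[OF D2s(1) D2s(2)] Es[OF D3s(1) D3s(2)])
  define BB where "BB i = (if i = 0 then D1 else if i = 1 then D2 else D3)" for i :: nat
  have BBs: "BB i \<in> sets lborel \<and> bounded (BB i)" for i unfolding BB_def using D1s D2s D3s by auto
  have sub1: "D1 \<subseteq> ball 0 (R (real n * h))" unfolding D1_def using Rm by (rule subset_ball)
  have disj: "BB 0 \<inter> BB 1 = {}" "BB 0 \<inter> BB 2 = {}" "BB 1 \<inter> BB 2 = {}"
    unfolding BB_def D2_def D3_def using sub1 by auto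
  have ind: "measure M (?E D1 {0} \<inter> ?E D2 {i} \<inter> ?E D3 A) = measure M (?E D1 {0}) * measure M (?E D2 {i}) * measure M (?E D3 A)" for i A
    using ppp_indep3[OF ppp _ disj, of "{0}" "{i}" A] BBs unfolding BB_def by simp
  have p1: "measure M (?E D1 {0}) = exp (- (real m * h))"
    using ppp_prob[OF ppp D1s, of 0] mu1 by simp
  have p2: "measure M (?E D2 {i}) = ((real n - real m) * h) ^ i / fact i * exp (- ((real n - real m) * h))" for i
    using ppp_prob[OF ppp D2s, of i] mu2 by simp
  have p3a: "measure M (?E D3 {1..}) \<le> h" using ppp_ge1[OF ppp D3s] mu3 by simp
  have p3b: "measure M (?E D3 {2..}) \<le> h\<^sup>2" using ppp_ge2[OF ppp D3s] mu3 lam by simp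
  have ex: "exp (- (real m * h)) * exp (- ((real n - real m) * h)) = exp (- h) ^ n"
    by (simp add: exp_add[symmetric] exp_of_nat_mult[symmetric] algebra_simps)
  define T where "T i = measure M (?E D1 {0} \<inter> ?E D2 {i} \<inter> ?E D3 {L - i..})" for i
  have T: "T i = exp (- h) ^ n * (((real n - real m) * h) ^ i / fact i) * measure M (?E D3 {L - i..})" for i
    unfolding T_def ind p1 p2 using ex by (simp add: mult_ac)
  have c0: "0 \<le> exp (- h) ^ n * (((real n - real m) * h) ^ i / fact i)" for i
    using mn h by simp
  have "measure M En \<le> (\<Sum>i<L. T i)"
    unfolding En_def T_def
    by (rule measure_UNION_le) (intro finite_lessThan sets.Int Es[OF D1s(1) D1s(2)] Es[OF D2s(1) D2s(2)] Es[OF D3s(1) D3s(2)])+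
  also have "(\<Sum>i<L. T i) = T (L - 1) + (\<Sum>i<L - 1. T i)"
  proof -
    have "{..<L} = insert (L - 1) {..<L - 1}" using L by auto
    then show ?thesis by simp
  qed
  also have "T (L - 1) \<le> exp (- h) ^ n * (((real n - real m) * h) ^ (L - 1) / fact (L - 1)) * h"
    unfolding T using L p3a by (intro mult_left_mono c0) auto
  also have "(\<Sum>i<L - 1. T i) \<le> (\<Sum>i<L - 1. exp (- h) ^ n * (((real n - real m) * h) ^ i / fact i) * h\<^sup>2)"
  proof (rule sum_mono)
    fix i assume i: "i \<in> {..<L - 1}"
    have "measure M (?E D3 {L - i..}) \<le> measure M (?E D3 {2..})"
    proof (rule finite_measure_mono)
      show "?E D3 {2..} \<in> sets M" by (rule Es[OF D3s(1) D3s(2)])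
    qed (use i in auto)
    then show "T i \<le> exp (- h) ^ n * (((real n - real m) * h) ^ i / fact i) * h\<^sup>2"
      unfolding T using p3b by (intro mult_left_mono c0) auto
  qed
  finally show "measure M En \<le> exp (- h) ^ n * (((real n - real m) * h) ^ (L - 1) / fact (L - 1) * h
        + (\<Sum>i<L - 1. ((real n - real m) * h) ^ i / fact i * h\<^sup>2))"
    by (simp add: algebra_simps sum_distrib_left)
qed

definition Rr :: "real \<Rightarrow> real \<Rightarrow> real" where
  "Rr lam t = sqrt (t / (lam * unit_ball_vol 2))"

definition Ev :: "'w measure \<Rightarrow> ('w \<Rightarrow> (real^2) set) \<Rightarrow> real \<Rightarrow> nat \<Rightarrow> real \<Rightarrow> real \<Rightarrow> nat \<Rightarrow> 'w set" where
  "Ev M Phi lam L s h n = (\<Union>i<L.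
      {\<omega>\<in>space M. card (Phi \<omega> \<inter> ball 0 (Rr lam (real (nat \<lfloor>s * real n\<rfloor>) * h))) \<in> {0}}
    \<inter> {\<omega>\<in>space M. card (Phi \<omega> \<inter> (ball 0 (Rr lam (real n * h)) - ball 0 (Rr lam (real (nat \<lfloor>s * real n\<rfloor>) * h)))) \<in> {i}}
    \<inter> {\<omega>\<in>space M. card (Phi \<omega> \<inter> (ball 0 (Rr lam ((real n + 1) * h)) - ball 0 (Rr lam (real n * h)))) \<in> {L - i..}})"

lemma Ev_prob:
  fixes L K :: nat
  assumes ppp: "poisson_point_process M Phi lam" and lam: "lam > 0" and h: "h > 0"
    and L: "L \<ge> 1" and s: "0 \<le> s" "s < 1" and K: "1 \<le> real K * (1 - s)"
  shows "Ev M Phi lam L s h n \<in> sets M" "measure M (Ev M Phi lam L s h n) \<le> bterm s h K (L - 1) n"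
proof -
  define m where "m = nat \<lfloor>s * real n\<rfloor>"
  have sn: "0 \<le> s * real n" using s by simp
  have m1: "real m \<le> s * real n" unfolding m_def using sn by simp
  have m2: "s * real n - 1 \<le> real m" unfolding m_def using sn by linarith
  have mn: "m \<le> n"
  proof -
    have "s * real n \<le> 1 * real n" using s by (intro mult_right_mono) auto
    then show ?thesis using m1 by linarith
  qed
  note E = En_prob[OF ppp lam h mn L]
  have eq: "Ev M Phi lam L s h n = (\<Union>i<L. {\<omega>\<in>space M. card (Phi \<omega> \<inter> ball 0 (sqrt (real m * h / (lam * unit_ball_vol 2)))) \<in> {0}}
       \<inter> {\<omega>\<in>space M. card (Phi \<omega> \<inter> (ball 0 (sqrt (real n * h / (lam * unit_ball_vol 2))) - ball 0 (sqrt (real m * h / (lam * unit_ball_vol 2))))) \<in> {i}}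
       \<inter> {\<omega>\<in>space M. card (Phi \<omega> \<inter> (ball 0 (sqrt ((real n + 1) * h / (lam * unit_ball_vol 2))) - ball 0 (sqrt (real n * h / (lam * unit_ball_vol 2))))) \<in> {L - i..}})"
    unfolding Ev_def Rr_def m_def ..
  show "Ev M Phi lam L s h n \<in> sets M" unfolding eq by (rule E(1))
  have d0: "0 \<le> (real n - real m) * h" using mn h by simp
  have d1: "(real n - real m) * h \<le> (1 - s) * (real n + real K) * h"
    using m2 K h by (intro mult_right_mono) (auto simp: algebra_simps)
  have d2: "(real n - real m) * h \<le> (real n + real K) * h"
    using h by (intro mult_right_mono) auto
  have "measure M (Ev M Phi lam L s h n) \<le> exp (- h) ^ n * (((real n - real m) * h) ^ (L - 1) / fact (L - 1) * h
        + (\<Sum>i<L - 1. ((real n - real m) * h) ^ i / fact i * h\<^sup>2))"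
    unfolding eq by (rule E(2))
  also have "\<dots> \<le> bterm s h K (L - 1) n"
  proof -
    have p1: "((real n - real m) * h) ^ (L - 1) \<le> ((1 - s) * (real n + real K) * h) ^ (L - 1)"
      by (rule power_mono[OF d1 d0])
    have p2: "((real n - real m) * h) ^ i \<le> ((real n + real K) * h) ^ i" for i
      by (rule power_mono[OF d2 d0])
    show ?thesis unfolding bterm_def
      by (intro mult_left_mono add_mono sum_mono divide_right_mono mult_right_mono p1 p2) (use h in auto)
  qed
  finally show "measure M (Ev M Phi lam L s h n) \<le> bterm s h K (L - 1) n" .
qed

lemma Ev_union:
  fixes L K :: nat
  assumes ppp: "poisson_point_process M Phi lam" and lam: "lam > 0" and h: "h > 0"
    and L: "L \<ge> 1" and s: "0 \<le> s" "s < 1" and K: "1 \<le> real K * (1 - s)"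
  shows "(\<Union>n. Ev M Phi lam L s h n) \<in> sets M" "measure M (\<Union>n. Ev M Phi lam L s h n) \<le> Fb s h K (L - 1)"
proof -
  interpret prob_space M using ppp_prob_space[OF ppp] .
  note E = Ev_prob[OF ppp lam h L s K]
  show "(\<Union>n. Ev M Phi lam L s h n) \<in> sets M" using E(1) by auto
  have sb: "summable (bterm s h K (L - 1))" using bterm_sum(1)[OF h] s by simp
  have sm: "summable (\<lambda>n. measure M (Ev M Phi lam L s h n))"
    by (rule summable_comparison_test[OF _ sb]) (use E(2) in auto)
  have "measure M (\<Union>n. Ev M Phi lam L s h n) \<le> (\<Sum>n. measure M (Ev M Phi lam L s h n))"
    by (rule finite_measure_subadditive_countably[OF _ sm]) (use E(1) in auto)
  also have "\<dots> \<le> (\<Sum>n. bterm s h K (L - 1) n)" by (rule suminf_le[OF E(2) sm sb])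
  also have "\<dots> \<le> Fb s h K (L - 1)" using bterm_sum(2)[OF h] s by simp
  finally show "measure M (\<Union>n. Ev M Phi lam L s h n) \<le> Fb s h K (L - 1)" .
qed

lemma Rr_mono: "lam > 0 \<Longrightarrow> t1 \<le> t2 \<Longrightarrow> Rr lam t1 \<le> Rr lam t2"
  unfolding Rr_def by (rule R_mono)

lemma Rr_strict: "lam > 0 \<Longrightarrow> t1 < t2 \<Longrightarrow> Rr lam t1 < Rr lam t2"
  unfolding Rr_def by (intro real_sqrt_less_mono divide_strict_right_mono) auto

lemma Rr_inv: "lam > 0 \<Longrightarrow> d \<ge> 0 \<Longrightarrow> Rr lam (lam * unit_ball_vol 2 * d\<^sup>2) = d"
proof -
  assume a: "lam > 0" "d \<ge> 0"
  have V: "unit_ball_vol 2 > 0" by simp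
  have V': "unit_ball_vol 2 \<noteq> 0" using V by linarith
  show ?thesis unfolding Rr_def using a by (simp add: V')
qed

lemma Rr_scale: "lam > 0 \<Longrightarrow> 0 \<le> s \<Longrightarrow> Rr lam (s * t) = sqrt s * Rr lam t"
  unfolding Rr_def by (simp add: real_sqrt_mult[symmetric] mult.assoc)

lemma incl:
  fixes S :: "(real^2) set" and L :: nat
  assumes lf: "locfin S" and z: "0 \<notin> S" and inf: "\<forall>n. \<exists>R. n \<le> card (S \<inter> cball 0 R)"
    and L: "L \<ge> 1" and lam: "lam > 0" and h: "h > 0" and s: "0 \<le> s" "s < 1"
    and r1: "sqrt s * kth_dist S L \<le> kth_dist S 1"
  shows "\<exists>n. \<exists>i<L.
      card (S \<inter> ball 0 (Rr lam (real (nat \<lfloor>s * real n\<rfloor>) * h))) \<in> {0}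
    \<and> card (S \<inter> (ball 0 (Rr lam (real n * h)) - ball 0 (Rr lam (real (nat \<lfloor>s * real n\<rfloor>) * h)))) \<in> {i}
    \<and> card (S \<inter> (ball 0 (Rr lam ((real n + 1) * h)) - ball 0 (Rr lam (real n * h)))) \<in> {L - i..}"
proof -
  have exL: "\<exists>R. L \<le> card (S \<inter> cball 0 R)" using inf by blast
  have ex1: "\<exists>R. 1 \<le> card (S \<inter> cball 0 R)" using inf by blast
  define dL where "dL = kth_dist S L"
  have dLp: "dL > 0" unfolding dL_def by (rule kd_pos[OF lf z L exL])
  define t where "t = lam * unit_ball_vol 2 * dL\<^sup>2"
  have t0: "t \<ge> 0" unfolding t_def using lam by simp
  define n where "n = nat \<lfloor>t / h\<rfloor>"
  have q: "0 \<le> t / h" using t0 h by simp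
  have n1: "real n * h \<le> t"
  proof -
    have "real n \<le> t / h" unfolding n_def using q by simp
    then show ?thesis using h by (simp add: field_simps)
  qed
  have n2: "t < (real n + 1) * h"
  proof -
    have "t / h < real n + 1" unfolding n_def using q by linarith
    then show ?thesis using h by (simp add: field_simps)
  qed
  have RdL: "Rr lam t = dL" unfolding t_def using lam dLp by (intro Rr_inv) auto
  have Rn: "Rr lam (real n * h) \<le> dL" using Rr_mono[OF lam n1] RdL by simp
  have Rn1: "dL < Rr lam ((real n + 1) * h)" using Rr_strict[OF lam n2] RdL by simp
  define m where "m = nat \<lfloor>s * real n\<rfloor>"
  have m1: "real m \<le> s * real n" unfolding m_def using s by simp
  have Rm: "Rr lam (real m * h) \<le> kth_dist S 1"
  proof -
    have "Rr lam (real m * h) \<le> Rr lam (s * (real n * h))"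
      using m1 h by (intro Rr_mono[OF lam]) (simp add: mult_right_mono mult.assoc[symmetric])
    also have "\<dots> = sqrt s * Rr lam (real n * h)" by (rule Rr_scale[OF lam s(1)])
    also have "\<dots> \<le> sqrt s * dL" using Rn s by (intro mult_left_mono) auto
    finally show ?thesis using r1 unfolding dL_def by simp
  qed
  have mn: "m \<le> n"
  proof -
    have "s * real n \<le> 1 * real n" using s by (intro mult_right_mono) auto
    then show ?thesis using m1 by linarith
  qed
  have Rmn: "Rr lam (real m * h) \<le> Rr lam (real n * h)"
    using mn h by (intro Rr_mono[OF lam] mult_right_mono) auto
  have Rnn: "Rr lam (real n * h) \<le> Rr lam ((real n + 1) * h)"
    using h by (intro Rr_mono[OF lam] mult_right_mono) auto
  let ?A = "S \<inter> ball 0 (Rr lam (real m * h))"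
  let ?B = "S \<inter> ball 0 (Rr lam (real n * h))"
  let ?C = "S \<inter> ball 0 (Rr lam ((real n + 1) * h))"
  have A0: "card ?A = 0"
  proof (rule ccontr)
    assume "card ?A \<noteq> 0"
    then have "1 \<le> card ?A" by simp
    then have "kth_dist S 1 < Rr lam (real m * h)" by (rule kd_lt_ball[OF lf order_refl])
    then show False using Rm by simp
  qed
  have Aemp: "?A = {}" using A0 locfin_ball[OF lf] by simp
  have BL: "card ?B < L"
  proof (rule ccontr)
    assume "\<not> card ?B < L"
    then have "L \<le> card ?B" by simp
    then have "dL < Rr lam (real n * h)" unfolding dL_def by (rule kd_lt_ball[OF lf L])
    then show False using Rn by simp
  qed
  have CL: "L \<le> card ?C" using kd_lessD[OF lf L exL] Rn1 unfolding dL_def by simp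
  have D2: "S \<inter> (ball 0 (Rr lam (real n * h)) - ball 0 (Rr lam (real m * h))) = ?B" using Aemp by auto
  have D3: "card (S \<inter> (ball 0 (Rr lam ((real n + 1) * h)) - ball 0 (Rr lam (real n * h)))) = card ?C - card ?B"
  proof -
    have "S \<inter> (ball 0 (Rr lam ((real n + 1) * h)) - ball 0 (Rr lam (real n * h))) = ?C - ?B" by auto
    moreover have "?B \<subseteq> ?C" using subset_ball[OF Rnn] by auto
    ultimately show ?thesis using locfin_ball[OF lf] by (simp add: card_Diff_subset)
  qed
  have P1: "card (S \<inter> ball 0 (Rr lam (real (nat \<lfloor>s * real n\<rfloor>) * h))) \<in> {0}" using A0 unfolding m_def by simp
  have P2: "card (S \<inter> (ball 0 (Rr lam (real n * h)) - ball 0 (Rr lam (real (nat \<lfloor>s * real n\<rfloor>) * h)))) \<in> {card ?B}"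
    using D2 unfolding m_def by simp
  have P3: "card (S \<inter> (ball 0 (Rr lam ((real n + 1) * h)) - ball 0 (Rr lam (real n * h)))) \<in> {L - card ?B..}"
    using D3 CL BL by simp
  show ?thesis using BL P1 P2 P3 by blast
qed

lemma SINR_true:
  assumes "\<forall>i\<ge>1. c i"
  shows "SINR S c L \<alpha> P \<sigma> k = SINR S (\<lambda>_. True) L \<alpha> P \<sigma> k"
proof -
  have e1: "(\<Sum>i\<in>{1..L} - {k}. of_bool (c i) * P * kth_dist S i powr - \<alpha>)
      = (\<Sum>i\<in>{1..L} - {k}. of_bool True * P * kth_dist S i powr - \<alpha>)"
    by (rule sum.cong) (use assms in auto)
  have e2: "(\<lambda>n. of_bool (c (n + L + 1)) * P * kth_dist S (n + L + 1) powr - \<alpha>)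
      = (\<lambda>n. of_bool True * P * kth_dist S (n + L + 1) powr - \<alpha>)"
    by (rule ext) (use assms in auto)
  show ?thesis unfolding SINR_def e1 e2 ..
qed

lemma tail_summable:
  assumes "summable (\<lambda>n. kth_dist S (n + 1) powr - \<alpha>)"
  shows "summable (\<lambda>n. of_bool True * P * kth_dist S (n + L + 1) powr - \<alpha>)"
proof -
  have "summable (\<lambda>n. (\<lambda>n. kth_dist S (n + 1) powr - \<alpha>) (n + L))"
    using assms by (subst summable_iff_shift)
  then have "summable (\<lambda>n. kth_dist S (n + L + 1) powr - \<alpha>)" by (simp add: add.assoc)
  then show ?thesis by (simp add: summable_mult)
qed

lemma SINR_L_zero:
  fixes S :: "(real^2) set" and L :: nat
  assumes lf: "locfin S" and z: "0 \<notin> S" and inf: "\<forall>n. \<exists>R. n \<le> card (S \<inter> cball 0 R)"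
    and L: "L \<ge> 2" and P: "P > 0" and \<sigma>: "\<sigma> \<ge> 0" and \<alpha>: "\<alpha> > 0"
    and sm: "summable (\<lambda>n. kth_dist S (n + 1) powr - \<alpha>)"
    and \<theta>: "\<theta> \<ge> 1 / (real L - 1)"
  shows "\<not> \<theta> \<le> SINR S (\<lambda>_. True) L \<alpha> P \<sigma> L"
proof
  assume le: "\<theta> \<le> SINR S (\<lambda>_. True) L \<alpha> P \<sigma> L"
  have ex: "\<exists>R. k \<le> card (S \<inter> cball 0 R)" for k using inf by blast
  have dpos: "0 < kth_dist S i" if "1 \<le> i" for i by (rule kd_pos[OF lf z that ex])
  define X where "X = P * kth_dist S L powr - \<alpha>"
  have X0: "X > 0" unfolding X_def using P dpos[of L] L by simp
  have pw: "X \<le> of_bool True * P * kth_dist S i powr - \<alpha>" if "i \<in> {1..L} - {L}" for i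
  proof -
    have "kth_dist S L powr - \<alpha> \<le> kth_dist S i powr - \<alpha>"
      by (rule powr_mono2') (use \<alpha> that dpos kd_mono[OF _ _ ex] in auto)
    then show ?thesis unfolding X_def using P by simp
  qed
  have cardA: "card ({1..L} - {L}) = L - 1" using L by simp
  have S1: "real (L - 1) * X \<le> (\<Sum>i\<in>{1..L} - {L}. of_bool True * P * kth_dist S i powr - \<alpha>)"
    using sum_bounded_below[of "{1..L} - {L}" X, OF pw] cardA by simp
  define T where "T = (\<Sum>n. of_bool True * P * kth_dist S (n + L + 1) powr - \<alpha>)"
  have T0: "T > 0" unfolding T_def
  proof (rule suminf_pos[OF tail_summable[OF sm]])
    fix n
    have "0 < kth_dist S (n + L + 1)" by (rule dpos) simp
    then show "0 < of_bool True * P * kth_dist S (n + L + 1) powr - \<alpha>" using P by simp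
  qed
  define D where "D = (\<Sum>i\<in>{1..L} - {L}. of_bool True * P * kth_dist S i powr - \<alpha>) + T + \<sigma>"
  have D: "real (L - 1) * X < D" unfolding D_def using S1 T0 \<sigma> by linarith
  have L1: "real (L - 1) > 0" using L by simp
  have Dp: "D > 0" using D L1 X0 by (smt (verit) mult_pos_pos)
  have "SINR S (\<lambda>_. True) L \<alpha> P \<sigma> L = X / D" unfolding SINR_def X_def D_def T_def by simp
  also have "X / D < 1 / real (L - 1)"
    using D Dp L1 by (simp add: divide_less_eq field_simps)
  also have "1 / real (L - 1) = 1 / (real L - 1)" using L by (simp add: of_nat_diff)
  finally show False using le \<theta> by simp
qed

lemma SINR_L_upper:
  fixes S :: "(real^2) set" and L :: nat
  assumes lf: "locfin S" and z: "0 \<notin> S" and inf: "\<forall>n. \<exists>R. n \<le> card (S \<inter> cball 0 R)"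
    and L: "L \<ge> 2" and P: "P > 0" and \<sigma>: "\<sigma> \<ge> 0" and \<alpha>: "\<alpha> > 0"
    and sm: "summable (\<lambda>n. kth_dist S (n + 1) powr - \<alpha>)"
    and \<theta>: "\<theta> > 0" and le: "\<theta> \<le> SINR S (\<lambda>_. True) L \<alpha> P \<sigma> L"
  shows "kth_dist S 1 powr - \<alpha> \<le> (1 / \<theta> - (real L - 2)) * kth_dist S L powr - \<alpha>"
proof -
  have ex: "\<exists>R. k \<le> card (S \<inter> cball 0 R)" for k using inf by blast
  have dpos: "0 < kth_dist S i" if "1 \<le> i" for i by (rule kd_pos[OF lf z that ex])
  define X where "X = P * kth_dist S L powr - \<alpha>"
  define Y where "Y = P * kth_dist S 1 powr - \<alpha>"
  have pw: "X \<le> of_bool True * P * kth_dist S i powr - \<alpha>" if "i \<in> {2..L} - {L}" for i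
  proof -
    have "kth_dist S L powr - \<alpha> \<le> kth_dist S i powr - \<alpha>"
      by (rule powr_mono2') (use \<alpha> that dpos kd_mono[OF _ _ ex] in auto)
    then show ?thesis unfolding X_def using P by simp
  qed
  have cardA: "card ({2..L} - {L}) = L - 2" using L by simp
  have S2: "real (L - 2) * X \<le> (\<Sum>i\<in>{2..L} - {L}. of_bool True * P * kth_dist S i powr - \<alpha>)"
    using sum_bounded_below[of "{2..L} - {L}" X, OF pw] cardA by simp
  have split: "{1..L} - {L} = insert 1 ({2..L} - {L})" using L by auto
  have S1: "(\<Sum>i\<in>{1..L} - {L}. of_bool True * P * kth_dist S i powr - \<alpha>)
      = Y + (\<Sum>i\<in>{2..L} - {L}. of_bool True * P * kth_dist S i powr - \<alpha>)"
    unfolding split Y_def by (subst sum.insert) auto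
  define T where "T = (\<Sum>n. of_bool True * P * kth_dist S (n + L + 1) powr - \<alpha>)"
  have T0: "T \<ge> 0" unfolding T_def
    by (rule suminf_nonneg[OF tail_summable[OF sm]]) (use P in simp)
  define D where "D = (\<Sum>i\<in>{1..L} - {L}. of_bool True * P * kth_dist S i powr - \<alpha>) + T + \<sigma>"
  have Y0: "Y > 0" unfolding Y_def using P dpos[of 1] by simp
  have X0: "X \<ge> 0" unfolding X_def using P by simp
  have D1: "Y + real (L - 2) * X \<le> D" unfolding D_def S1 using S2 T0 \<sigma> by linarith
  have Dp: "D > 0" using D1 Y0 X0 by (smt (verit) mult_nonneg_nonneg of_nat_0_le_iff)
  have "SINR S (\<lambda>_. True) L \<alpha> P \<sigma> L = X / D" unfolding SINR_def X_def D_def T_def by simp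
  with le have "\<theta> * D \<le> X" using Dp by (simp add: le_divide_eq)
  then have "\<theta> * (Y + real (L - 2) * X) \<le> X" using D1 \<theta>
    by (meson mult_left_mono order_trans less_imp_le)
  then have "Y \<le> X / \<theta> - real (L - 2) * X" using \<theta> by (simp add: field_simps)
  then have "Y \<le> (1 / \<theta> - real (L - 2)) * X" by (simp add: algebra_simps)
  then have "P * kth_dist S 1 powr - \<alpha> \<le> P * ((1 / \<theta> - real (L - 2)) * kth_dist S L powr - \<alpha>)"
    unfolding X_def Y_def by (simp add: mult_ac)
  then have "kth_dist S 1 powr - \<alpha> \<le> (1 / \<theta> - real (L - 2)) * kth_dist S L powr - \<alpha>"
    using P by simp
  then show ?thesis using L by (simp add: of_nat_diff)
qed

lemma ratio_lemma:
  fixes d1 dL t \<alpha> :: real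
  assumes d1: "d1 > 0" and dL: "dL > 0" and t: "t > 0" and \<alpha>: "\<alpha> > 0"
    and le: "d1 powr - \<alpha> \<le> t * dL powr - \<alpha>"
  shows "sqrt (t powr (- 2 / \<alpha>)) * dL \<le> d1"
proof -
  have "(t * dL powr - \<alpha>) powr (- 1 / \<alpha>) \<le> (d1 powr - \<alpha>) powr (- 1 / \<alpha>)"
    by (rule powr_mono2') (use \<alpha> d1 le in auto)
  also have "(d1 powr - \<alpha>) powr (- 1 / \<alpha>) = d1"
    using \<alpha> d1 by (simp add: powr_powr)
  also have "(t * dL powr - \<alpha>) powr (- 1 / \<alpha>) = t powr (- 1 / \<alpha>) * dL"
    using \<alpha> dL t by (simp add: powr_mult powr_powr)
  also have "t powr (- 1 / \<alpha>) = sqrt (t powr (- 2 / \<alpha>))"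
  proof -
    have "sqrt (t powr (- 2 / \<alpha>)) = (t powr (- 2 / \<alpha>)) powr (1 / 2)"
      by (simp add: powr_half_sqrt)
    also have "\<dots> = t powr (- 1 / \<alpha>)" by (simp add: powr_powr)
    finally show ?thesis by simp
  qed
  finally show ?thesis .
qed

lemma AE_c:
  fixes c :: "nat \<Rightarrow> 'w \<Rightarrow> bool"
  assumes P: "prob_space M"
    and dist: "\<And>i. i \<ge> 1 \<Longrightarrow> distr M (count_space UNIV) (c i) = measure_pmf (bernoulli_pmf 1)"
    and ind: "prob_space.indep_vars M (\<lambda>_. count_space UNIV) c {1..}"
  shows "AE \<omega> in M. \<forall>i\<ge>1. c i \<omega>"
proof -
  interpret prob_space M by (rule P)
  have "AE \<omega> in M. 1 \<le> i \<longrightarrow> c i \<omega>" for i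
  proof (cases "1 \<le> i")
    case True
    have meas: "c i \<in> measurable M (count_space UNIV)"
      using ind True unfolding indep_vars_def by auto
    have "emeasure M (c i -` {True} \<inter> space M) = emeasure (distr M (count_space UNIV) (c i)) {True}"
      by (rule emeasure_distr[OF meas, symmetric]) simp
    also have "\<dots> = 1" using dist[OF True] by (simp add: emeasure_pmf_single)
    finally have "prob (c i -` {True} \<inter> space M) = 1" by (simp add: emeasure_eq_measure)
    then have "AE \<omega> in M. \<omega> \<in> c i -` {True} \<inter> space M" by (rule AE_prob_1)
    then show ?thesis by (rule AE_mp) (auto intro!: AE_I2)
  qed simp
  then have "AE \<omega> in M. \<forall>i. 1 \<le> i \<longrightarrow> c i \<omega>" by (simp add: AE_all_countable)
  then show ?thesis by simp
qed

theorem corollary1: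
  fixes M :: "'w measure" and Phi :: "'w \<Rightarrow> (real^2) set" and c :: "nat \<Rightarrow> 'w \<Rightarrow> bool"
    and L :: nat and lam alpha P sigma2 gamma beta p q :: real
  assumes ppp: "poisson_point_process M Phi lam"
    and lam: "lam > 0" and alpha: "alpha > 2" and P: "P > 0" and sigma2: "sigma2 \<ge> 0"
    and gamma: "gamma > 0" and beta: "beta > 0"
    and pq: "p \<in> {0..1}" "q \<in> {0..1}"
    and a_dist: "\<And>i. i \<in> {1..L} \<Longrightarrow>
                   distr M (count_space UNIV) (c i) = measure_pmf (bernoulli_pmf p)"
    and b_dist: "\<And>j. j \<ge> L + 1 \<Longrightarrow>
                   distr M (count_space UNIV) (c j) = measure_pmf (bernoulli_pmf q)"
    and c_indep: "prob_space.indep_vars M (\<lambda>_. count_space UNIV) c {1..}"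
    and p1: "p = 1" and q1: "q = 1"
    and L2: "L \<ge> 2"
  shows "(beta < gamma / (real L - 1) \<longrightarrow>
            coverage_PL M Phi c L alpha P sigma2 gamma beta
              \<le> (1 - (gamma / beta - (real L - 2)) powr (- 2 / alpha)) ^ (L - 1))
       \<and> (beta \<ge> gamma / (real L - 1) \<longrightarrow>
            coverage_PL M Phi c L alpha P sigma2 gamma beta = 0)"
proof -
  interpret prob_space M using ppp_prob_space[OF ppp] .
  define \<theta> where "\<theta> = beta / gamma"
  have \<theta>0: "\<theta> > 0" unfolding \<theta>_def using beta gamma by simp
  have cdist: "distr M (count_space UNIV) (c i) = measure_pmf (bernoulli_pmf 1)" if "i \<ge> 1" for i
  proof (cases "i \<le> L")
    case True then show ?thesis using a_dist[of i] that p1 by simp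
  next
    case False then show ?thesis using b_dist[of i] q1 by simp
  qed
  have aec: "AE \<omega> in M. \<forall>i\<ge>1. c i \<omega>"
    by (rule AE_c[OF prob_space_axioms cdist c_indep])
  have aez: "AE \<omega> in M. 0 \<notin> Phi \<omega>" by (rule ppp_AE_no0[OF ppp])
  have aeinf: "AE \<omega> in M. \<forall>n. \<exists>R. n \<le> card (Phi \<omega> \<inter> cball 0 R)" by (rule ppp_AE_inf[OF ppp lam])
  define b where "b = (2 + alpha) / 2"
  have b: "b > 2" "0 < b" "b < alpha" unfolding b_def using alpha by auto
  have aeg: "AE \<omega> in M. \<exists>C. \<forall>j::nat. (2 powr - b) ^ j * real (card (Phi \<omega> \<inter> cball 0 (2 ^ j))) \<le> C"
    by (rule ppp_AE_growth[OF ppp lam b(1)])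
  have good: "AE \<omega> in M. (\<forall>i\<ge>1. c i \<omega>) \<and> locfin (Phi \<omega>) \<and> 0 \<notin> Phi \<omega>
      \<and> (\<forall>n. \<exists>R. n \<le> card (Phi \<omega> \<inter> cball 0 R))
      \<and> summable (\<lambda>n. kth_dist (Phi \<omega>) (n + 1) powr - alpha)"
    using aec aez aeinf aeg AE_space
  proof eventually_elim
    case (elim \<omega>)
    have lf: "locfin (Phi \<omega>)" using ppp_locfin[OF ppp] elim by blast
    obtain C where C: "\<forall>j::nat. (2 powr - b) ^ j * real (card (Phi \<omega> \<inter> cball 0 (2 ^ j))) \<le> C"
      using elim by blast
    have "summable (\<lambda>n. kth_dist (Phi \<omega>) (n + 1) powr - alpha)"
      by (rule kd_summable[OF lf _ _ b(2) b(3) C]) (use elim in auto)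
    then show ?case using elim lf by blast
  qed
  define F where "F \<omega> = (\<Prod>k\<in>{1..L}. of_bool (beta / gamma \<le> SINR (Phi \<omega>) (\<lambda>i. c i \<omega>) L alpha P sigma2 k) :: real)" for \<omega>
  have cov: "coverage_PL M Phi c L alpha P sigma2 gamma beta = integral\<^sup>L M F"
    unfolding coverage_PL_def F_def ..
  have L1: "L \<ge> 1" "L \<in> {1..L}" using L2 by auto
  have alpha0: "alpha > 0" using alpha by simp
  have part2: "beta \<ge> gamma / (real L - 1) \<longrightarrow> coverage_PL M Phi c L alpha P sigma2 gamma beta = 0"
  proof
    assume bge: "beta \<ge> gamma / (real L - 1)"
    have Lr: "real L - 1 > 0" using L2 by simp
    have th: "\<theta> \<ge> 1 / (real L - 1)"
    proof -
      have "gamma / (real L - 1) / gamma \<le> beta / gamma" using bge gamma by (intro divide_right_mono) auto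
      then show ?thesis unfolding \<theta>_def using gamma by simp
    qed
    have "AE \<omega> in M. F \<omega> = 0"
      using good
    proof eventually_elim
      case (elim \<omega>)
      have "\<not> \<theta> \<le> SINR (Phi \<omega>) (\<lambda>_. True) L alpha P sigma2 L"
        by (rule SINR_L_zero) (use elim L2 P sigma2 alpha0 th in auto)
      then have "\<not> beta / gamma \<le> SINR (Phi \<omega>) (\<lambda>i. c i \<omega>) L alpha P sigma2 L"
        using SINR_true[of "\<lambda>i. c i \<omega>"] elim unfolding \<theta>_def by simp
      then show ?case unfolding F_def using L1 by (intro prod_zero) auto
    qed
    then show "coverage_PL M Phi c L alpha P sigma2 gamma beta = 0"
      unfolding cov by (rule integral_eq_zero_AE)
  qed
  have part1: "beta < gamma / (real L - 1) \<longrightarrow>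
            coverage_PL M Phi c L alpha P sigma2 gamma beta
              \<le> (1 - (gamma / beta - (real L - 2)) powr (- 2 / alpha)) ^ (L - 1)"
  proof
    assume blt: "beta < gamma / (real L - 1)"
    define t where "t = gamma / beta - (real L - 2)"
    define s where "s = t powr (- 2 / alpha)"
    have Lr: "real L - 1 > 0" using L2 by simp
    have t1: "t > 1"
    proof -
      have "beta * (real L - 1) < gamma" using blt Lr by (simp add: field_simps)
      then have "real L - 1 < gamma / beta" using beta by (simp add: field_simps)
      then show ?thesis unfolding t_def by simp
    qed
    have s0: "0 < s" unfolding s_def using t1 by simp
    have s1: "s < 1" unfolding s_def using t1 alpha by (intro powr_less_one) (auto simp: divide_neg_pos)
    have tth: "1 / \<theta> - (real L - 2) = t" unfolding t_def \<theta>_def by simp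
    define K where "K = nat \<lceil>1 / (1 - s)\<rceil>"
    have K: "1 \<le> real K * (1 - s)"
    proof -
      have "1 / (1 - s) \<le> real K" unfolding K_def by linarith
      then show ?thesis using s1 by (simp add: field_simps)
    qed
    have nn: "0 \<le> (1 - s) ^ (L - 1)" using s1 by simp
    show "coverage_PL M Phi c L alpha P sigma2 gamma beta
              \<le> (1 - (gamma / beta - (real L - 2)) powr (- 2 / alpha)) ^ (L - 1)"
    proof (cases "integrable M F")
      case False
      then show ?thesis unfolding cov using nn unfolding s_def t_def by (simp add: not_integrable_integral_eq)
    next
      case True
      have bound: "integral\<^sup>L M F \<le> Fb s h K (L - 1)" if h: "h > 0" for h
      proof -
        let ?U = "\<Union>n. Ev M Phi lam L s h n"
        note EU = Ev_union[OF ppp lam h L1(1) less_imp_le[OF s0] s1 K]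
        have "AE \<omega> in M. F \<omega> \<le> indicator ?U \<omega>"
          using good AE_space
        proof eventually_elim
          case (elim \<omega>)
          show ?case
          proof (cases "F \<omega> = 0")
            case True then show ?thesis by simp
          next
            case False
            have F1: "F \<omega> \<le> 1" unfolding F_def by (intro prod_le_1) auto
            have "beta / gamma \<le> SINR (Phi \<omega>) (\<lambda>i. c i \<omega>) L alpha P sigma2 L"
            proof (rule ccontr)
              assume "\<not> ?thesis"
              then have "F \<omega> = 0" unfolding F_def using L1 by (intro prod_zero) auto
              then show False using False by simp
            qed
            then have le: "\<theta> \<le> SINR (Phi \<omega>) (\<lambda>_. True) L alpha P sigma2 L"
              using SINR_true[of "\<lambda>i. c i \<omega>"] elim unfolding \<theta>_def by simp
            have lf: "locfin (Phi \<omega>)" and z: "0 \<notin> Phi \<omega>"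
              and inf: "\<forall>n. \<exists>R. n \<le> card (Phi \<omega> \<inter> cball 0 R)" using elim by auto
            have r: "kth_dist (Phi \<omega>) 1 powr - alpha \<le> t * kth_dist (Phi \<omega>) L powr - alpha"
              using SINR_L_upper[OF lf z inf L2 P sigma2 alpha0 _ \<theta>0 le] elim tth by simp
            have ex: "\<exists>R. k \<le> card (Phi \<omega> \<inter> cball 0 R)" for k using inf by blast
            have "sqrt s * kth_dist (Phi \<omega>) L \<le> kth_dist (Phi \<omega>) 1"
              unfolding s_def
              by (rule ratio_lemma[OF kd_pos[OF lf z _ ex] kd_pos[OF lf z _ ex] _ alpha0 r]) (use t1 L1 in auto)
            from incl[OF lf z inf L1(1) lam h less_imp_le[OF s0] s1 this]
            have "\<omega> \<in> ?U" using elim unfolding Ev_def by blast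
            then show ?thesis using F1 by simp
          qed
        qed
        then have "integral\<^sup>L M F \<le> integral\<^sup>L M (indicator ?U :: 'w \<Rightarrow> real)"
          by (intro integral_mono_AE True) (use EU(1) in \<open>simp add: less_top[symmetric]\<close>)
        also have "\<dots> = measure M ?U" using EU(1) sets.sets_into_space by (simp add: Int_absorb2)
        also have "\<dots> \<le> Fb s h K (L - 1)" by (rule EU(2))
        finally show ?thesis .
      qed
      have "integral\<^sup>L M F \<le> (1 - s) ^ (L - 1)"
      proof (rule tendsto_le[OF _ Fb_tendsto tendsto_const])
        show "at_right (0::real) \<noteq> bot" by simp
        show "\<forall>\<^sub>F h in at_right 0. integral\<^sup>L M F \<le> Fb s h K (L - 1)"
          using bound eventually_at_right_less[of 0] by (auto elim!: eventually_mono)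
      qed
      then show ?thesis unfolding cov s_def t_def .
    qed
  qed
  show ?thesis using part1 part2 by blast
qed

end
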